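(* Let $G$ be a finite group and $T$ a $G$-Tambara functor. The Nakaoka spectrum $\operatorname{Spec}_{\mathbf{Nak}}(T)$ is a spectral space.
   Context: All rings are commutative with unit. A $G$-Tambara functor $T$ consists of commutative rings $T(G/H)$ for subgroups $H\le G$ with restriction ring maps, additive transfer maps, multiplicative norm maps and conjugation isomorphisms satisfying the standard Tambara axioms (Hill–Mazur). A Tambara ideal is a family of ring ideals $I(G/H)\subseteq T(G/H)$ closed under restriction, transfer, norm and conjugation; it is proper if $1\notin I(G/G)$. The product $IJ$ of Tambara ideals is the Tambara ideal generated by the levelwise products $I(G/H)J(G/H)$. A proper Tambara ideal $P$ is prime if for all Tambara ideals $I,J$, $IJ\subseteq P$ implies $I\subseteq P$ or $J\subseteq P$. $\operatorname{Spec}_{\mathbf{Nak}}(T)$ is the set of prime Tambara ideals, topologized by taking the sets $V_H(x)=\{P\mid x\in P(G/H)\}$ ($H\le G$, $x\in T(G/H)$) as a subbasis of closed sets. A spectral space (Hochster) is a quasi-compact sober space whose quasi-compact opens are closed under finite intersections and form a basis. *)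

theory Defs
  imports "HOL-Analysis.Abstract_Topology" "HOL-Algebra.Ideal_Product" "HOL-Algebra.Coset"
          "HOL-Library.FuncSet"
begin

definition conjg :: "('g, 'b) monoid_scheme \<Rightarrow> 'g \<Rightarrow> 'g set \<Rightarrow> 'g set" where
  "conjg G g K = {g \<otimes>\<^bsub>G\<^esub> k \<otimes>\<^bsub>G\<^esub> inv\<^bsub>G\<^esub> g | k. k \<in> K}"

definition cosets_in :: "('g, 'b) monoid_scheme \<Rightarrow> 'g set \<Rightarrow> 'g set \<Rightarrow> 'g set set" where
  "cosets_in G H K = {h <#\<^bsub>G\<^esub> K | h. h \<in> H}"

definition dcosets :: "('g, 'b) monoid_scheme \<Rightarrow> 'g set \<Rightarrow> 'g set \<Rightarrow> 'g set \<Rightarrow> 'g set set" where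
  "dcosets G H L K = {{l \<otimes>\<^bsub>G\<^esub> h \<otimes>\<^bsub>G\<^esub> k | l k. l \<in> L \<and> k \<in> K} | h. h \<in> H}"

definition dcrep :: "('g, 'b) monoid_scheme \<Rightarrow> 'g set \<Rightarrow> 'g set \<Rightarrow> 'g set \<Rightarrow> 'g set \<Rightarrow> 'g" where
  "dcrep G H L K D = (SOME h. h \<in> H \<and> D = {l \<otimes>\<^bsub>G\<^esub> h \<otimes>\<^bsub>G\<^esub> k | l k. l \<in> L \<and> k \<in> K})"

definition bool_fns :: "('g, 'b) monoid_scheme \<Rightarrow> 'g set \<Rightarrow> 'g set \<Rightarrow> ('g set \<Rightarrow> bool) set" where
  "bool_fns G H K = (cosets_in G H K \<rightarrow>\<^sub>E (UNIV :: bool set))"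

definition bool_act :: "('g, 'b) monoid_scheme \<Rightarrow> 'g set \<Rightarrow> 'g set \<Rightarrow> 'g \<Rightarrow> ('g set \<Rightarrow> bool) \<Rightarrow> ('g set \<Rightarrow> bool)" where
  "bool_act G H K h s = (\<lambda>x\<in>cosets_in G H K. s (inv\<^bsub>G\<^esub> h <#\<^bsub>G\<^esub> x))"

definition bool_orbits :: "('g, 'b) monoid_scheme \<Rightarrow> 'g set \<Rightarrow> 'g set \<Rightarrow> ('g set \<Rightarrow> bool) set set" where
  "bool_orbits G H K = {{bool_act G H K h s | h. h \<in> H} | s. s \<in> bool_fns G H K}"

definition bool_stab :: "('g, 'b) monoid_scheme \<Rightarrow> 'g set \<Rightarrow> 'g set \<Rightarrow> ('g set \<Rightarrow> bool) \<Rightarrow> 'g set" where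
  "bool_stab G H K s = {h \<in> H. \<forall>x \<in> cosets_in G H K. s (h <#\<^bsub>G\<^esub> x) = s x}"

text \<open>Sections of H/L -> H/K (L <= K <= H), i.e. the exponential object for the
  composite H/L -> H/K -> H/H; H acts by (h.s)(x) = h s(h^-1 x).\<close>
definition sections :: "('g, 'b) monoid_scheme \<Rightarrow> 'g set \<Rightarrow> 'g set \<Rightarrow> 'g set \<Rightarrow> ('g set \<Rightarrow> 'g set) set" where
  "sections G H K L = {s \<in> cosets_in G H K \<rightarrow>\<^sub>E cosets_in G H L. \<forall>x \<in> cosets_in G H K. s x \<subseteq> x}"

definition sec_act :: "('g, 'b) monoid_scheme \<Rightarrow> 'g set \<Rightarrow> 'g set \<Rightarrow> 'g \<Rightarrow> ('g set \<Rightarrow> 'g set) \<Rightarrow> ('g set \<Rightarrow> 'g set)" where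
  "sec_act G H K h s = (\<lambda>x\<in>cosets_in G H K. h <#\<^bsub>G\<^esub> s (inv\<^bsub>G\<^esub> h <#\<^bsub>G\<^esub> x))"

definition sec_orbits :: "('g, 'b) monoid_scheme \<Rightarrow> 'g set \<Rightarrow> 'g set \<Rightarrow> 'g set \<Rightarrow> ('g set \<Rightarrow> 'g set) set set" where
  "sec_orbits G H K L = {{sec_act G H K h s | h. h \<in> H} | s. s \<in> sections G H K L}"

definition sec_stab :: "('g, 'b) monoid_scheme \<Rightarrow> 'g set \<Rightarrow> 'g set \<Rightarrow> ('g set \<Rightarrow> 'g set) \<Rightarrow> 'g set" where
  "sec_stab G H K s = {h \<in> H. \<forall>x \<in> cosets_in G H K. h <#\<^bsub>G\<^esub> s x = s (h <#\<^bsub>G\<^esub> x)}"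

section \<open>Tambara functors (orbit-level description, Hill--Mazur)\<close>

text \<open>Level T(G/H) is indexed by the subgroup H.
  res K H : T(G/H) -> T(G/K),  tr K H, nm K H : T(G/K) -> T(G/H)  (K <= H),
  cj g K : T(G/K) -> T(G/gKg^-1).\<close>
record ('g, 'r) tambara_data =
  lev :: "'g set \<Rightarrow> 'r ring"
  res :: "'g set \<Rightarrow> 'g set \<Rightarrow> 'r \<Rightarrow> 'r"
  tr  :: "'g set \<Rightarrow> 'g set \<Rightarrow> 'r \<Rightarrow> 'r"
  nm  :: "'g set \<Rightarrow> 'g set \<Rightarrow> 'r \<Rightarrow> 'r"
  cj  :: "'g \<Rightarrow> 'g set \<Rightarrow> 'r \<Rightarrow> 'r"

definition tambara_functor :: "('g, 'b) monoid_scheme \<Rightarrow> ('g, 'r) tambara_data \<Rightarrow> bool" where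
  "tambara_functor G T \<longleftrightarrow>
    \<comment> \<open>levels are commutative rings\<close>
    (\<forall>H. subgroup H G \<longrightarrow> cring (lev T H)) \<and>
    \<comment> \<open>restriction and conjugation are ring homomorphisms\<close>
    (\<forall>H K. subgroup H G \<longrightarrow> subgroup K G \<longrightarrow> K \<subseteq> H \<longrightarrow>
        res T K H \<in> ring_hom (lev T H) (lev T K)) \<and>
    (\<forall>g K. g \<in> carrier G \<longrightarrow> subgroup K G \<longrightarrow>
        cj T g K \<in> ring_hom (lev T K) (lev T (conjg G g K))) \<and>
    \<comment> \<open>transfers are additive, norms multiplicative (and unital, preserve 0)\<close>
    (\<forall>H K. subgroup H G \<longrightarrow> subgroup K G \<longrightarrow> K \<subseteq> H \<longrightarrow>
        (\<forall>a \<in> carrier (lev T K). tr T K H a \<in> carrier (lev T H) \<and> nm T K H a \<in> carrier (lev T H)) \<and>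
        (\<forall>a \<in> carrier (lev T K). \<forall>b \<in> carrier (lev T K).
            tr T K H (a \<oplus>\<^bsub>lev T K\<^esub> b) = tr T K H a \<oplus>\<^bsub>lev T H\<^esub> tr T K H b \<and>
            nm T K H (a \<otimes>\<^bsub>lev T K\<^esub> b) = nm T K H a \<otimes>\<^bsub>lev T H\<^esub> nm T K H b) \<and>
        nm T K H \<one>\<^bsub>lev T K\<^esub> = \<one>\<^bsub>lev T H\<^esub> \<and>
        nm T K H \<zero>\<^bsub>lev T K\<^esub> = \<zero>\<^bsub>lev T H\<^esub>) \<and>
    \<comment> \<open>identities and transitivity\<close>
    (\<forall>H. subgroup H G \<longrightarrow> (\<forall>a \<in> carrier (lev T H).
        res T H H a = a \<and> tr T H H a = a \<and> nm T H H a = a)) \<and>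
    (\<forall>H K L. subgroup H G \<longrightarrow> subgroup K G \<longrightarrow> subgroup L G \<longrightarrow> L \<subseteq> K \<longrightarrow> K \<subseteq> H \<longrightarrow>
        (\<forall>a \<in> carrier (lev T H). res T L K (res T K H a) = res T L H a) \<and>
        (\<forall>a \<in> carrier (lev T L). tr T K H (tr T L K a) = tr T L H a \<and>
                                   nm T K H (nm T L K a) = nm T L H a)) \<and>
    \<comment> \<open>conjugations: action of G, trivial action of H on T(G/H)\<close>
    (\<forall>H. subgroup H G \<longrightarrow> (\<forall>h \<in> H. \<forall>a \<in> carrier (lev T H). cj T h H a = a)) \<and>
    (\<forall>g g' K. g \<in> carrier G \<longrightarrow> g' \<in> carrier G \<longrightarrow> subgroup K G \<longrightarrow>
        (\<forall>a \<in> carrier (lev T K).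
           cj T g (conjg G g' K) (cj T g' K a) = cj T (g \<otimes>\<^bsub>G\<^esub> g') K a)) \<and>
    \<comment> \<open>conjugations commute with restriction, transfer and norm\<close>
    (\<forall>g H K. g \<in> carrier G \<longrightarrow> subgroup H G \<longrightarrow> subgroup K G \<longrightarrow> K \<subseteq> H \<longrightarrow>
        (\<forall>a \<in> carrier (lev T H).
           cj T g K (res T K H a) = res T (conjg G g K) (conjg G g H) (cj T g H a)) \<and>
        (\<forall>a \<in> carrier (lev T K).
           cj T g H (tr T K H a) = tr T (conjg G g K) (conjg G g H) (cj T g K a) \<and>
           cj T g H (nm T K H a) = nm T (conjg G g K) (conjg G g H) (cj T g K a))) \<and>
    \<comment> \<open>Frobenius reciprocity\<close>
    (\<forall>H K. subgroup H G \<longrightarrow> subgroup K G \<longrightarrow> K \<subseteq> H \<longrightarrow>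
        (\<forall>a \<in> carrier (lev T K). \<forall>b \<in> carrier (lev T H).
           tr T K H a \<otimes>\<^bsub>lev T H\<^esub> b = tr T K H (a \<otimes>\<^bsub>lev T K\<^esub> res T K H b))) \<and>
    \<comment> \<open>additive and multiplicative double coset formulas\<close>
    (\<forall>H K L. subgroup H G \<longrightarrow> subgroup K G \<longrightarrow> subgroup L G \<longrightarrow> K \<subseteq> H \<longrightarrow> L \<subseteq> H \<longrightarrow>
        (\<forall>a \<in> carrier (lev T K).
           res T L H (tr T K H a) =
             finsum (lev T L)
               (\<lambda>D. let h = dcrep G H L K D; K' = conjg G (inv\<^bsub>G\<^esub> h) L \<inter> K in
                      tr T (L \<inter> conjg G h K) L (cj T h K' (res T K' K a)))
               (dcosets G H L K) \<and>
           res T L H (nm T K H a) =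
             finprod (lev T L)
               (\<lambda>D. let h = dcrep G H L K D; K' = conjg G (inv\<^bsub>G\<^esub> h) L \<inter> K in
                      nm T (L \<inter> conjg G h K) L (cj T h K' (res T K' K a)))
               (dcosets G H L K))) \<and>
    \<comment> \<open>Tambara reciprocity: norm of a sum\<close>
    (\<forall>H K. subgroup H G \<longrightarrow> subgroup K G \<longrightarrow> K \<subseteq> H \<longrightarrow>
        (\<forall>a \<in> carrier (lev T K). \<forall>b \<in> carrier (lev T K).
           nm T K H (a \<oplus>\<^bsub>lev T K\<^esub> b) =
             finsum (lev T H)
               (\<lambda>Ob. let s = (SOME s. s \<in> Ob); M = bool_stab G H K s in
                  tr T M H
                    (finprod (lev T M)
                       (\<lambda>D. let h = dcrep G H M K D; K' = conjg G (inv\<^bsub>G\<^esub> h) M \<inter> K in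
                          nm T (M \<inter> conjg G h K) M
                            (cj T h K' (res T K' K (if s (h <#\<^bsub>G\<^esub> K) then a else b))))
                       (dcosets G H M K)))
               (bool_orbits G H K))) \<and>
    \<comment> \<open>Tambara reciprocity: norm of a transfer\<close>
    (\<forall>H K L. subgroup H G \<longrightarrow> subgroup K G \<longrightarrow> subgroup L G \<longrightarrow> L \<subseteq> K \<longrightarrow> K \<subseteq> H \<longrightarrow>
        (\<forall>a \<in> carrier (lev T L).
           nm T K H (tr T L K a) =
             finsum (lev T H)
               (\<lambda>Ob. let s = (SOME s. s \<in> Ob); M = sec_stab G H K s in
                  tr T M H
                    (finprod (lev T M)
                       (\<lambda>D. let h = dcrep G H M K D;
                               h' = (SOME h'. h' \<in> H \<and> s (h <#\<^bsub>G\<^esub> K) = h' <#\<^bsub>G\<^esub> L) in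
                          nm T (M \<inter> conjg G h K) M
                            (res T (M \<inter> conjg G h K) (conjg G h' L) (cj T h' L a)))
                       (dcosets G H M K)))
               (sec_orbits G H K L)))"

text \<open>A Tambara ideal, normalised to be empty at non-subgroups.\<close>
definition tambara_ideal :: "('g, 'b) monoid_scheme \<Rightarrow> ('g, 'r) tambara_data \<Rightarrow> ('g set \<Rightarrow> 'r set) \<Rightarrow> bool" where
  "tambara_ideal G T I \<longleftrightarrow>
    (\<forall>H. \<not> subgroup H G \<longrightarrow> I H = {}) \<and>
    (\<forall>H. subgroup H G \<longrightarrow> ideal (I H) (lev T H)) \<and>
    (\<forall>H K. subgroup H G \<longrightarrow> subgroup K G \<longrightarrow> K \<subseteq> H \<longrightarrow>
        (\<forall>a \<in> I H. res T K H a \<in> I K) \<and>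
        (\<forall>a \<in> I K. tr T K H a \<in> I H \<and> nm T K H a \<in> I H)) \<and>
    (\<forall>g K. g \<in> carrier G \<longrightarrow> subgroup K G \<longrightarrow> (\<forall>a \<in> I K. cj T g K a \<in> I (conjg G g K)))"

definition tambara_gen :: "('g, 'b) monoid_scheme \<Rightarrow> ('g, 'r) tambara_data \<Rightarrow> ('g set \<Rightarrow> 'r set) \<Rightarrow> ('g set \<Rightarrow> 'r set)" where
  "tambara_gen G T S = (\<lambda>H. if subgroup H G
      then \<Inter> {I H | I. tambara_ideal G T I \<and> (\<forall>K. S K \<subseteq> I K)} else {})"

definition tambara_prod :: "('g, 'b) monoid_scheme \<Rightarrow> ('g, 'r) tambara_data \<Rightarrow> ('g set \<Rightarrow> 'r set) \<Rightarrow> ('g set \<Rightarrow> 'r set) \<Rightarrow> ('g set \<Rightarrow> 'r set)" where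
  "tambara_prod G T I J = tambara_gen G T (\<lambda>H. if subgroup H G then ideal_prod (lev T H) (I H) (J H) else {})"

definition tambara_sub :: "('g set \<Rightarrow> 'r set) \<Rightarrow> ('g set \<Rightarrow> 'r set) \<Rightarrow> bool" where
  "tambara_sub I J \<longleftrightarrow> (\<forall>H. I H \<subseteq> J H)"

definition tambara_prime :: "('g, 'b) monoid_scheme \<Rightarrow> ('g, 'r) tambara_data \<Rightarrow> ('g set \<Rightarrow> 'r set) \<Rightarrow> bool" where
  "tambara_prime G T P \<longleftrightarrow>
    tambara_ideal G T P \<and> \<one>\<^bsub>lev T (carrier G)\<^esub> \<notin> P (carrier G) \<and>
    (\<forall>I J. tambara_ideal G T I \<longrightarrow> tambara_ideal G T J \<longrightarrow>
        tambara_sub (tambara_prod G T I J) P \<longrightarrow> tambara_sub I P \<or> tambara_sub J P)"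

definition nak_spec :: "('g, 'b) monoid_scheme \<Rightarrow> ('g, 'r) tambara_data \<Rightarrow> ('g set \<Rightarrow> 'r set) set" where
  "nak_spec G T = {P. tambara_prime G T P}"

definition nak_V :: "('g, 'b) monoid_scheme \<Rightarrow> ('g, 'r) tambara_data \<Rightarrow> 'g set \<Rightarrow> 'r \<Rightarrow> ('g set \<Rightarrow> 'r set) set" where
  "nak_V G T H x = {P \<in> nak_spec G T. x \<in> P H}"

text \<open>Topology whose closed subbasis is the V_H(x): open subbasis = complements.\<close>
definition nak_topology :: "('g, 'b) monoid_scheme \<Rightarrow> ('g, 'r) tambara_data \<Rightarrow> ('g set \<Rightarrow> 'r set) topology" where
  "nak_topology G T = topology_generated_by
     (insert (nak_spec G T)
       {nak_spec G T - nak_V G T H x | H x. subgroup H G \<and> x \<in> carrier (lev T H)})"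

definition irreducible_closed :: "'a topology \<Rightarrow> 'a set \<Rightarrow> bool" where
  "irreducible_closed X Z \<longleftrightarrow> closedin X Z \<and> Z \<noteq> {} \<and>
     (\<forall>A B. closedin X A \<longrightarrow> closedin X B \<longrightarrow> Z \<subseteq> A \<union> B \<longrightarrow> Z \<subseteq> A \<or> Z \<subseteq> B)"

definition sober_space :: "'a topology \<Rightarrow> bool" where
  "sober_space X \<longleftrightarrow> (\<forall>Z. irreducible_closed X Z \<longrightarrow>
     (\<exists>!x. x \<in> topspace X \<and> X closure_of {x} = Z))"

definition spectral_space :: "'a topology \<Rightarrow> bool" where
  "spectral_space X \<longleftrightarrow>
     compact_space X \<and> sober_space X \<and>
     (\<forall>U V. openin X U \<longrightarrow> compactin X U \<longrightarrow> openin X V \<longrightarrow> compactin X V \<longrightarrow>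
        compactin X (U \<inter> V)) \<and>
     (\<forall>W x. openin X W \<longrightarrow> x \<in> W \<longrightarrow>
        (\<exists>U. openin X U \<and> compactin X U \<and> x \<in> U \<and> U \<subseteq> W))"

end

theory Submission
  imports Defs "HOL-Analysis.Function_Topology"
begin

locale tamb =
  fixes G :: "('g, 'b) monoid_scheme" (structure) and T :: "('g, 'r) tambara_data"
  assumes grp: "group G" and finG: "finite (carrier G)" and TF: "tambara_functor G T"
begin

sublocale group G by (rule grp)

lemmas TFu = TF[unfolded tambara_functor_def]
lemmas conj1 = TFu[THEN conjunct1]
lemmas conj2 = TFu[THEN conjunct2, THEN conjunct1]
lemmas conj3 = TFu[THEN conjunct2, THEN conjunct2, THEN conjunct1]
lemmas conj4 = TFu[THEN conjunct2, THEN conjunct2, THEN conjunct2, THEN conjunct1]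
lemmas conj5 = TFu[THEN conjunct2, THEN conjunct2, THEN conjunct2, THEN conjunct2, THEN conjunct1]
lemmas conj6 = TFu[THEN conjunct2, THEN conjunct2, THEN conjunct2, THEN conjunct2, THEN conjunct2, THEN conjunct1]
lemmas conj7 = TFu[THEN conjunct2, THEN conjunct2, THEN conjunct2, THEN conjunct2, THEN conjunct2, THEN conjunct2, THEN conjunct1]
lemmas conj8 = TFu[THEN conjunct2, THEN conjunct2, THEN conjunct2, THEN conjunct2, THEN conjunct2, THEN conjunct2, THEN conjunct2, THEN conjunct1]
lemmas conj9 = TFu[THEN conjunct2, THEN conjunct2, THEN conjunct2, THEN conjunct2, THEN conjunct2, THEN conjunct2, THEN conjunct2, THEN conjunct2, THEN conjunct1]
lemmas conj10 = TFu[THEN conjunct2, THEN conjunct2, THEN conjunct2, THEN conjunct2, THEN conjunct2, THEN conjunct2, THEN conjunct2, THEN conjunct2, THEN conjunct2, THEN conjunct1]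
lemmas conj11 = TFu[THEN conjunct2, THEN conjunct2, THEN conjunct2, THEN conjunct2, THEN conjunct2, THEN conjunct2, THEN conjunct2, THEN conjunct2, THEN conjunct2, THEN conjunct2, THEN conjunct1]
lemmas conj12 = TFu[THEN conjunct2, THEN conjunct2, THEN conjunct2, THEN conjunct2, THEN conjunct2, THEN conjunct2, THEN conjunct2, THEN conjunct2, THEN conjunct2, THEN conjunct2, THEN conjunct2, THEN conjunct1]
lemmas conj13 = TFu[THEN conjunct2, THEN conjunct2, THEN conjunct2, THEN conjunct2, THEN conjunct2, THEN conjunct2, THEN conjunct2, THEN conjunct2, THEN conjunct2, THEN conjunct2, THEN conjunct2, THEN conjunct2]

abbreviation "R H \<equiv> lev T H"
abbreviation "sg H \<equiv> subgroup H G"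

lemma cring_lev: "sg H \<Longrightarrow> cring (R H)"
  using conj1 by blast

lemma res_hom: "sg H \<Longrightarrow> sg K \<Longrightarrow> K \<subseteq> H \<Longrightarrow> res T K H \<in> ring_hom (R H) (R K)"
  using conj2 by blast

lemma cj_hom: "g \<in> carrier G \<Longrightarrow> sg K \<Longrightarrow> cj T g K \<in> ring_hom (R K) (R (conjg G g K))"
  using conj3 by blast

lemma tr_nm_basic: "sg H \<Longrightarrow> sg K \<Longrightarrow> K \<subseteq> H \<Longrightarrow>
        (\<forall>a \<in> carrier (R K). tr T K H a \<in> carrier (R H) \<and> nm T K H a \<in> carrier (R H)) \<and>
        (\<forall>a \<in> carrier (R K). \<forall>b \<in> carrier (R K).
            tr T K H (a \<oplus>\<^bsub>R K\<^esub> b) = tr T K H a \<oplus>\<^bsub>R H\<^esub> tr T K H b \<and>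
            nm T K H (a \<otimes>\<^bsub>R K\<^esub> b) = nm T K H a \<otimes>\<^bsub>R H\<^esub> nm T K H b) \<and>
        nm T K H \<one>\<^bsub>R K\<^esub> = \<one>\<^bsub>R H\<^esub> \<and>
        nm T K H \<zero>\<^bsub>R K\<^esub> = \<zero>\<^bsub>R H\<^esub>"
  using conj4 by blast

lemma ids: "sg H \<Longrightarrow> a \<in> carrier (R H) \<Longrightarrow> res T H H a = a \<and> tr T H H a = a \<and> nm T H H a = a"
  using conj5 by blast

lemma trans_ax: "sg H \<Longrightarrow> sg K \<Longrightarrow> sg L \<Longrightarrow> L \<subseteq> K \<Longrightarrow> K \<subseteq> H \<Longrightarrow>
        (\<forall>a \<in> carrier (R H). res T L K (res T K H a) = res T L H a) \<and>
        (\<forall>a \<in> carrier (R L). tr T K H (tr T L K a) = tr T L H a \<and>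
                                   nm T K H (nm T L K a) = nm T L H a)"
  using conj6 by blast

lemma cj_triv: "sg H \<Longrightarrow> h \<in> H \<Longrightarrow> a \<in> carrier (R H) \<Longrightarrow> cj T h H a = a"
  using conj7 by blast

lemma cj_comp: "g \<in> carrier G \<Longrightarrow> g' \<in> carrier G \<Longrightarrow> sg K \<Longrightarrow> a \<in> carrier (R K) \<Longrightarrow>
    cj T g (conjg G g' K) (cj T g' K a) = cj T (g \<otimes> g') K a"
  using conj8 by blast

lemma cj_rtn: "g \<in> carrier G \<Longrightarrow> sg H \<Longrightarrow> sg K \<Longrightarrow> K \<subseteq> H \<Longrightarrow>
        (\<forall>a \<in> carrier (R H).
           cj T g K (res T K H a) = res T (conjg G g K) (conjg G g H) (cj T g H a)) \<and>
        (\<forall>a \<in> carrier (R K).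
           cj T g H (tr T K H a) = tr T (conjg G g K) (conjg G g H) (cj T g K a) \<and>
           cj T g H (nm T K H a) = nm T (conjg G g K) (conjg G g H) (cj T g K a))"
  using conj9 by blast

lemma frob: "sg H \<Longrightarrow> sg K \<Longrightarrow> K \<subseteq> H \<Longrightarrow> a \<in> carrier (R K) \<Longrightarrow> b \<in> carrier (R H) \<Longrightarrow>
           tr T K H a \<otimes>\<^bsub>R H\<^esub> b = tr T K H (a \<otimes>\<^bsub>R K\<^esub> res T K H b)"
  using conj10 by blast

lemma dc_ax: "sg H \<Longrightarrow> sg K \<Longrightarrow> sg L \<Longrightarrow> K \<subseteq> H \<Longrightarrow> L \<subseteq> H \<Longrightarrow> a \<in> carrier (R K) \<Longrightarrow>
           res T L H (tr T K H a) =
             finsum (R L)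
               (\<lambda>D. let h = dcrep G H L K D; K' = conjg G (inv h) L \<inter> K in
                      tr T (L \<inter> conjg G h K) L (cj T h K' (res T K' K a)))
               (dcosets G H L K) \<and>
           res T L H (nm T K H a) =
             finprod (R L)
               (\<lambda>D. let h = dcrep G H L K D; K' = conjg G (inv h) L \<inter> K in
                      nm T (L \<inter> conjg G h K) L (cj T h K' (res T K' K a)))
               (dcosets G H L K)"
  using conj11 by blast

lemma nm_sum_ax: "sg H \<Longrightarrow> sg K \<Longrightarrow> K \<subseteq> H \<Longrightarrow> a \<in> carrier (R K) \<Longrightarrow> b \<in> carrier (R K) \<Longrightarrow>
           nm T K H (a \<oplus>\<^bsub>R K\<^esub> b) =
             finsum (R H)
               (\<lambda>Ob. let s = (SOME s. s \<in> Ob); M = bool_stab G H K s in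
                  tr T M H
                    (finprod (R M)
                       (\<lambda>D. let h = dcrep G H M K D; K' = conjg G (inv h) M \<inter> K in
                          nm T (M \<inter> conjg G h K) M
                            (cj T h K' (res T K' K (if s (h <# K) then a else b))))
                       (dcosets G H M K)))
               (bool_orbits G H K)"
  using conj12 by blast

lemma nm_tr_ax: "sg H \<Longrightarrow> sg K \<Longrightarrow> sg L \<Longrightarrow> L \<subseteq> K \<Longrightarrow> K \<subseteq> H \<Longrightarrow> a \<in> carrier (R L) \<Longrightarrow>
           nm T K H (tr T L K a) =
             finsum (R H)
               (\<lambda>Ob. let s = (SOME s. s \<in> Ob); M = sec_stab G H K s in
                  tr T M H
                    (finprod (R M)
                       (\<lambda>D. let h = dcrep G H M K D;
                               h' = (SOME h'. h' \<in> H \<and> s (h <# K) = h' <# L) in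
                          nm T (M \<inter> conjg G h K) M
                            (res T (M \<inter> conjg G h K) (conjg G h' L) (cj T h' L a)))
                       (dcosets G H M K)))
               (sec_orbits G H K L)"
  using conj13 by blast

end

context tamb begin

lemma sg_carrier: "sg H \<Longrightarrow> H \<subseteq> carrier G"
  by (rule subgroup.subset)

lemma cancel1: "g \<in> carrier G \<Longrightarrow> k \<in> carrier G \<Longrightarrow> inv g \<otimes> (g \<otimes> k) = k"
  by (simp add: m_assoc[symmetric])
lemma cancel2: "g \<in> carrier G \<Longrightarrow> k \<in> carrier G \<Longrightarrow> g \<otimes> (inv g \<otimes> k) = k"
  by (simp add: m_assoc[symmetric])

lemma conj_expr1: "g \<in> carrier G \<Longrightarrow> k \<in> carrier G \<Longrightarrow> inv g \<otimes> (g \<otimes> k \<otimes> inv g) \<otimes> g = k"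
  by (simp add: m_assoc cancel1)
lemma conj_expr2: "g \<in> carrier G \<Longrightarrow> x \<in> carrier G \<Longrightarrow> g \<otimes> (inv g \<otimes> x \<otimes> g) \<otimes> inv g = x"
  by (simp add: m_assoc cancel2)

lemma conjg_mem_iff: assumes g: "g \<in> carrier G" and K: "K \<subseteq> carrier G" and x: "x \<in> carrier G"
  shows "x \<in> conjg G g K \<longleftrightarrow> inv g \<otimes> x \<otimes> g \<in> K"
proof
  assume "x \<in> conjg G g K"
  then obtain k where k: "k \<in> K" "x = g \<otimes> k \<otimes> inv g" unfolding conjg_def by blast
  have "k \<in> carrier G" using k K by blast
  then have "inv g \<otimes> x \<otimes> g = k" using k(2) conj_expr1[OF g] by simp
  then show "inv g \<otimes> x \<otimes> g \<in> K" using k(1) by simp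
next
  assume "inv g \<otimes> x \<otimes> g \<in> K"
  moreover have "x = g \<otimes> (inv g \<otimes> x \<otimes> g) \<otimes> inv g" using conj_expr2[OF g x] by simp
  ultimately show "x \<in> conjg G g K" unfolding conjg_def by blast
qed

lemma conjg_sub: "g \<in> carrier G \<Longrightarrow> K \<subseteq> carrier G \<Longrightarrow> conjg G g K \<subseteq> carrier G"
  unfolding conjg_def by auto

lemma conjg_subgroup: assumes g: "g \<in> carrier G" and K: "sg K" shows "sg (conjg G g K)"
proof (rule subgroupI)
  have Kc: "K \<subseteq> carrier G" using K by (rule sg_carrier)
  show "conjg G g K \<subseteq> carrier G" using conjg_sub[OF g Kc] .
  show "conjg G g K \<noteq> {}" using subgroup.one_closed[OF K] unfolding conjg_def by blast
  fix a b assume a: "a \<in> conjg G g K" and b: "b \<in> conjg G g K"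
  then obtain k1 k2 where k: "k1 \<in> K" "a = g \<otimes> k1 \<otimes> inv g" "k2 \<in> K" "b = g \<otimes> k2 \<otimes> inv g"
    unfolding conjg_def by blast
  have k1c: "k1 \<in> carrier G" and k2c: "k2 \<in> carrier G" using k Kc by auto
  have "inv a = g \<otimes> inv k1 \<otimes> inv g" using k(2) g k1c by (simp add: inv_mult_group m_assoc)
  moreover have "inv k1 \<in> K" using K k(1) by (rule subgroup.m_inv_closed)
  ultimately show "inv a \<in> conjg G g K" unfolding conjg_def by blast
  have "a \<otimes> b = g \<otimes> (k1 \<otimes> (inv g \<otimes> (g \<otimes> k2))) \<otimes> inv g" using k g k1c k2c
    by (simp add: m_assoc)
  also have "\<dots> = g \<otimes> (k1 \<otimes> k2) \<otimes> inv g" using g k2c by (simp add: cancel1)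
  finally have "a \<otimes> b = g \<otimes> (k1 \<otimes> k2) \<otimes> inv g" .
  moreover have "k1 \<otimes> k2 \<in> K" using K k by (simp add: subgroup.m_closed)
  ultimately show "a \<otimes> b \<in> conjg G g K" unfolding conjg_def by blast
qed

lemma conjg_comp: assumes g: "g \<in> carrier G" and g': "g' \<in> carrier G" and K: "K \<subseteq> carrier G"
  shows "conjg G g (conjg G g' K) = conjg G (g \<otimes> g') K"
proof -
  have e: "g \<otimes> (g' \<otimes> k \<otimes> inv g') \<otimes> inv g = (g \<otimes> g') \<otimes> k \<otimes> inv (g \<otimes> g')" if "k \<in> K" for k
  proof -
    have k: "k \<in> carrier G" using that K by blast
    show ?thesis using g g' k by (simp add: inv_mult_group m_assoc)
  qed
  show ?thesis
  proof
    show "conjg G g (conjg G g' K) \<subseteq> conjg G (g \<otimes> g') K"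
      unfolding conjg_def using e by blast
    show "conjg G (g \<otimes> g') K \<subseteq> conjg G g (conjg G g' K)"
    proof
      fix x assume "x \<in> conjg G (g \<otimes> g') K"
      then obtain k where k: "k \<in> K" "x = (g \<otimes> g') \<otimes> k \<otimes> inv (g \<otimes> g')" unfolding conjg_def by blast
      have "g' \<otimes> k \<otimes> inv g' \<in> conjg G g' K" using k(1) unfolding conjg_def by blast
      moreover have "x = g \<otimes> (g' \<otimes> k \<otimes> inv g') \<otimes> inv g" using e[OF k(1)] k(2) by simp
      ultimately show "x \<in> conjg G g (conjg G g' K)" unfolding conjg_def by blast
    qed
  qed
qed

lemma conjg_one: "K \<subseteq> carrier G \<Longrightarrow> conjg G \<one> K = K"
  unfolding conjg_def by (force simp: subsetD)

lemma conjg_inv: "g \<in> carrier G \<Longrightarrow> K \<subseteq> carrier G \<Longrightarrow> conjg G (inv g) (conjg G g K) = K"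
  by (simp add: conjg_comp conjg_one)

lemma conjg_inv2: "g \<in> carrier G \<Longrightarrow> K \<subseteq> carrier G \<Longrightarrow> conjg G g (conjg G (inv g) K) = K"
  by (simp add: conjg_comp conjg_one)

lemma conjg_mono: "A \<subseteq> B \<Longrightarrow> conjg G g A \<subseteq> conjg G g B"
  unfolding conjg_def by blast

lemma conjg_Int: assumes g: "g \<in> carrier G" and A: "A \<subseteq> carrier G" and B: "B \<subseteq> carrier G"
  shows "conjg G g (A \<inter> B) = conjg G g A \<inter> conjg G g B"
proof -
  have "x \<in> conjg G g (A \<inter> B)" if "x \<in> conjg G g A" "x \<in> conjg G g B" for x
  proof -
    have xc: "x \<in> carrier G" using that conjg_sub[OF g A] by blast
    have "x \<in> carrier G" using xc .
    then show ?thesis using that conjg_mem_iff[OF g A xc] conjg_mem_iff[OF g B xc]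
      conjg_mem_iff[of g "A \<inter> B" x] g A by blast
  qed
  then show ?thesis using conjg_mono[of "A \<inter> B" A g] conjg_mono[of "A \<inter> B" B g] by blast
qed

lemma conjg_self: "sg H \<Longrightarrow> h \<in> H \<Longrightarrow> conjg G h H = H"
proof -
  assume H: "sg H" and h: "h \<in> H"
  have hc: "h \<in> carrier G" using H h sg_carrier by blast
  have Hc: "H \<subseteq> carrier G" using H sg_carrier by blast
  show ?thesis
  proof
    show "conjg G h H \<subseteq> H" unfolding conjg_def
      using H h by (auto intro!: subgroup.m_closed subgroup.m_inv_closed)
    show "H \<subseteq> conjg G h H"
    proof
      fix x assume x: "x \<in> H"
      have xc: "x \<in> carrier G" using x Hc by blast
      have "inv h \<otimes> x \<otimes> h \<in> H" using H h x by (auto intro!: subgroup.m_closed subgroup.m_inv_closed)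
      then show "x \<in> conjg G h H" using conjg_mem_iff[OF hc Hc xc] by simp
    qed
  qed
qed

lemma conjg_key: "h \<in> carrier G \<Longrightarrow> L \<subseteq> carrier G \<Longrightarrow> K \<subseteq> carrier G \<Longrightarrow>
  conjg G h (conjg G (inv h) L \<inter> K) = L \<inter> conjg G h K"
  by (simp add: conjg_Int conjg_sub conjg_inv2)

lemma sg_Int: "sg A \<Longrightarrow> sg B \<Longrightarrow> sg (A \<inter> B)"
  by (rule subgroups_Inter_pair)

lemma dcosets_finite: "H \<subseteq> carrier G \<Longrightarrow> finite (dcosets G H L K)"
proof -
  assume "H \<subseteq> carrier G"
  then have "finite H" using finG finite_subset by blast
  moreover have "dcosets G H L K = (\<lambda>h. {l \<otimes> h \<otimes> k | l k. l \<in> L \<and> k \<in> K}) ` H"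
    unfolding dcosets_def by blast
  ultimately show ?thesis by simp
qed

lemma dcosets_ne: "H \<noteq> {} \<Longrightarrow> dcosets G H L K \<noteq> {}"
  unfolding dcosets_def by blast

lemma dcrep_in: "D \<in> dcosets G H L K \<Longrightarrow> dcrep G H L K D \<in> H"
  unfolding dcosets_def dcrep_def by (rule someI2_ex) auto

lemma dcosets_self: assumes H: "sg H" and K: "sg K" and KH: "K \<subseteq> H"
  shows "dcosets G H H K = {H}"
proof -
  have "{l \<otimes> h \<otimes> k | l k. l \<in> H \<and> k \<in> K} = H" if h: "h \<in> H" for h
  proof
    show "{l \<otimes> h \<otimes> k | l k. l \<in> H \<and> k \<in> K} \<subseteq> H"
      using H h KH by (auto intro!: subgroup.m_closed)
    show "H \<subseteq> {l \<otimes> h \<otimes> k | l k. l \<in> H \<and> k \<in> K}"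
    proof
      fix x assume x: "x \<in> H"
      have c: "x \<in> carrier G" "h \<in> carrier G" using x h H sg_carrier by auto
      have "x = (x \<otimes> inv h) \<otimes> h \<otimes> \<one>" using c by (simp add: m_assoc)
      moreover have "x \<otimes> inv h \<in> H" using H x h by (auto intro!: subgroup.m_closed subgroup.m_inv_closed)
      moreover have "\<one> \<in> K" using K by (rule subgroup.one_closed)
      ultimately show "x \<in> {l \<otimes> h \<otimes> k | l k. l \<in> H \<and> k \<in> K}" by blast
    qed
  qed
  moreover have "H \<noteq> {}" using H subgroup.one_closed by blast
  moreover have "dcosets G H H K = (\<lambda>h. {l \<otimes> h \<otimes> k | l k. l \<in> H \<and> k \<in> K}) ` H"
    unfolding dcosets_def by blast
  ultimately show ?thesis by auto
qed

lemma finite_sg: "sg H \<Longrightarrow> finite H"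
  using finG sg_carrier finite_subset by blast

end

lemma ideal_intro_cring:
  fixes R (structure)
  assumes R: "cring R" and sub: "I \<subseteq> carrier R" and z: "\<zero> \<in> I"
    and add: "\<And>a b. a \<in> I \<Longrightarrow> b \<in> I \<Longrightarrow> a \<oplus> b \<in> I"
    and mul: "\<And>a x. a \<in> I \<Longrightarrow> x \<in> carrier R \<Longrightarrow> x \<otimes> a \<in> I"
  shows "ideal I R"
proof -
  interpret cring R by (rule R)
  have neg: "\<ominus> a \<in> I" if "a \<in> I" for a
  proof -
    have "\<ominus> a = (\<ominus> \<one>) \<otimes> a" using that sub by (simp add: l_minus subsetD)
    then show ?thesis using mul[OF that] by simp
  qed
  show ?thesis
  proof (rule idealI)
    show "ring R" by (rule ring_axioms)
    show "subgroup I (add_monoid R)"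
      by (rule add.subgroupI) (use sub z add neg in \<open>auto simp: a_inv_def[symmetric]\<close>)
    show "\<And>a x. a \<in> I \<Longrightarrow> x \<in> carrier R \<Longrightarrow> x \<otimes> a \<in> I" by (rule mul)
    show "\<And>a x. a \<in> I \<Longrightarrow> x \<in> carrier R \<Longrightarrow> a \<otimes> x \<in> I"
      using mul sub by (metis m_comm subsetD)
  qed
qed

lemma ideal_finsum:
  fixes R (structure)
  assumes R: "ring R" and I: "ideal I R" and f: "\<And>x. x \<in> A \<Longrightarrow> f x \<in> I"
  shows "finsum R f A \<in> I"
proof -
  interpret ring R by (rule R)
  interpret ideal I R by (rule I)
  show ?thesis
  proof (cases "finite A")
    case False then show ?thesis by (simp add: finsum_infinite)
  next
    case True
    then show ?thesis using f
    proof (induction A rule: finite_induct)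
      case empty then show ?case by (simp add: finsum_empty)
    next
      case (insert x A)
      have "f \<in> A \<rightarrow> carrier R" "f x \<in> carrier R" using insert.prems by auto
      then show ?case using insert by (simp add: finsum_insert)
    qed
  qed
qed

lemma finprod_pick:
  fixes R (structure)
  assumes R: "cring R" and A: "finite A" and x: "x \<in> A" and f: "f \<in> A \<rightarrow> carrier R"
  shows "\<exists>r \<in> carrier R. finprod R f A = r \<otimes> f x"
proof -
  interpret cring R by (rule R)
  have "A = insert x (A - {x})" using x by blast
  then have "finprod R f A = f x \<otimes> finprod R f (A - {x})"
  proof -
    have "finprod R f (insert x (A - {x})) = f x \<otimes> finprod R f (A - {x})"
      using A f x by (intro finprod_insert) auto
    then show ?thesis using \<open>A = insert x (A - {x})\<close> by simp
  qed
  also have "\<dots> = finprod R f (A - {x}) \<otimes> f x" using f x by (simp add: m_comm Pi_iff)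
  finally show ?thesis using f by (intro bexI[of _ "finprod R f (A - {x})"]) (auto intro!: finprod_closed)
qed

lemma ideal_finprod:
  fixes R (structure)
  assumes R: "cring R" and I: "ideal I R" and A: "finite A" and x: "x \<in> A" and f: "f \<in> A \<rightarrow> carrier R"
    and fx: "f x \<in> I"
  shows "finprod R f A \<in> I"
proof -
  obtain r where r: "r \<in> carrier R" "finprod R f A = r \<otimes> f x" using finprod_pick[OF R A x f] by blast
  show ?thesis unfolding r(2) by (rule ideal.I_l_closed[OF I fx r(1)])
qed

context tamb begin

lemma res_carrier: "sg H \<Longrightarrow> sg K \<Longrightarrow> K \<subseteq> H \<Longrightarrow> a \<in> carrier (R H) \<Longrightarrow> res T K H a \<in> carrier (R K)"
  by (rule ring_hom_closed[OF res_hom])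
lemma res_mult: "sg H \<Longrightarrow> sg K \<Longrightarrow> K \<subseteq> H \<Longrightarrow> a \<in> carrier (R H) \<Longrightarrow> b \<in> carrier (R H) \<Longrightarrow>
   res T K H (a \<otimes>\<^bsub>R H\<^esub> b) = res T K H a \<otimes>\<^bsub>R K\<^esub> res T K H b"
  by (rule ring_hom_mult[OF res_hom])
lemma res_add: "sg H \<Longrightarrow> sg K \<Longrightarrow> K \<subseteq> H \<Longrightarrow> a \<in> carrier (R H) \<Longrightarrow> b \<in> carrier (R H) \<Longrightarrow>
   res T K H (a \<oplus>\<^bsub>R H\<^esub> b) = res T K H a \<oplus>\<^bsub>R K\<^esub> res T K H b"
  by (rule ring_hom_add[OF res_hom])
lemma res_zero: "sg H \<Longrightarrow> sg K \<Longrightarrow> K \<subseteq> H \<Longrightarrow> res T K H \<zero>\<^bsub>R H\<^esub> = \<zero>\<^bsub>R K\<^esub>"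
  by (rule ring_hom_zero[OF res_hom cring.axioms(1)[OF cring_lev] cring.axioms(1)[OF cring_lev]])

lemma cj_carrier: "g \<in> carrier G \<Longrightarrow> sg K \<Longrightarrow> a \<in> carrier (R K) \<Longrightarrow> cj T g K a \<in> carrier (R (conjg G g K))"
  by (rule ring_hom_closed[OF cj_hom])
lemma cj_mult: "g \<in> carrier G \<Longrightarrow> sg K \<Longrightarrow> a \<in> carrier (R K) \<Longrightarrow> b \<in> carrier (R K) \<Longrightarrow>
   cj T g K (a \<otimes>\<^bsub>R K\<^esub> b) = cj T g K a \<otimes>\<^bsub>R (conjg G g K)\<^esub> cj T g K b"
  by (rule ring_hom_mult[OF cj_hom])
lemma cj_add: "g \<in> carrier G \<Longrightarrow> sg K \<Longrightarrow> a \<in> carrier (R K) \<Longrightarrow> b \<in> carrier (R K) \<Longrightarrow>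
   cj T g K (a \<oplus>\<^bsub>R K\<^esub> b) = cj T g K a \<oplus>\<^bsub>R (conjg G g K)\<^esub> cj T g K b"
  by (rule ring_hom_add[OF cj_hom])
lemma cj_zero: "g \<in> carrier G \<Longrightarrow> sg K \<Longrightarrow> cj T g K \<zero>\<^bsub>R K\<^esub> = \<zero>\<^bsub>R (conjg G g K)\<^esub>"
  by (rule ring_hom_zero[OF cj_hom cring.axioms(1)[OF cring_lev] cring.axioms(1)[OF cring_lev[OF conjg_subgroup]]])

lemma tr_carrier: "sg H \<Longrightarrow> sg K \<Longrightarrow> K \<subseteq> H \<Longrightarrow> a \<in> carrier (R K) \<Longrightarrow> tr T K H a \<in> carrier (R H)"
  using tr_nm_basic by blast
lemma nm_carrier: "sg H \<Longrightarrow> sg K \<Longrightarrow> K \<subseteq> H \<Longrightarrow> a \<in> carrier (R K) \<Longrightarrow> nm T K H a \<in> carrier (R H)"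
  using tr_nm_basic by blast
lemma tr_add: "sg H \<Longrightarrow> sg K \<Longrightarrow> K \<subseteq> H \<Longrightarrow> a \<in> carrier (R K) \<Longrightarrow> b \<in> carrier (R K) \<Longrightarrow>
   tr T K H (a \<oplus>\<^bsub>R K\<^esub> b) = tr T K H a \<oplus>\<^bsub>R H\<^esub> tr T K H b"
  using tr_nm_basic by blast
lemma nm_mult: "sg H \<Longrightarrow> sg K \<Longrightarrow> K \<subseteq> H \<Longrightarrow> a \<in> carrier (R K) \<Longrightarrow> b \<in> carrier (R K) \<Longrightarrow>
   nm T K H (a \<otimes>\<^bsub>R K\<^esub> b) = nm T K H a \<otimes>\<^bsub>R H\<^esub> nm T K H b"
  using tr_nm_basic by blast
lemma nm_zero: "sg H \<Longrightarrow> sg K \<Longrightarrow> K \<subseteq> H \<Longrightarrow> nm T K H \<zero>\<^bsub>R K\<^esub> = \<zero>\<^bsub>R H\<^esub>"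
  using tr_nm_basic by blast
lemma tr_zero: assumes H: "sg H" and K: "sg K" and KH: "K \<subseteq> H" shows "tr T K H \<zero>\<^bsub>R K\<^esub> = \<zero>\<^bsub>R H\<^esub>"
proof -
  interpret RH: cring "R H" using cring_lev[OF H] .
  interpret RK: cring "R K" using cring_lev[OF K] .
  have c: "tr T K H \<zero>\<^bsub>R K\<^esub> \<in> carrier (R H)" using tr_carrier[OF H K KH] by simp
  have "tr T K H \<zero>\<^bsub>R K\<^esub> \<oplus>\<^bsub>R H\<^esub> tr T K H \<zero>\<^bsub>R K\<^esub> = tr T K H \<zero>\<^bsub>R K\<^esub> \<oplus>\<^bsub>R H\<^esub> \<zero>\<^bsub>R H\<^esub>"
    using tr_add[OF H K KH, of "\<zero>\<^bsub>R K\<^esub>" "\<zero>\<^bsub>R K\<^esub>"] c by simp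
  then show ?thesis using c by simp
qed

lemma res_id: "sg H \<Longrightarrow> a \<in> carrier (R H) \<Longrightarrow> res T H H a = a" using ids by blast
lemma tr_id: "sg H \<Longrightarrow> a \<in> carrier (R H) \<Longrightarrow> tr T H H a = a" using ids by blast
lemma nm_id: "sg H \<Longrightarrow> a \<in> carrier (R H) \<Longrightarrow> nm T H H a = a" using ids by blast
lemma res_res: "sg H \<Longrightarrow> sg K \<Longrightarrow> sg L \<Longrightarrow> L \<subseteq> K \<Longrightarrow> K \<subseteq> H \<Longrightarrow> a \<in> carrier (R H) \<Longrightarrow>
  res T L K (res T K H a) = res T L H a" using trans_ax by blast
lemma tr_tr: "sg H \<Longrightarrow> sg K \<Longrightarrow> sg L \<Longrightarrow> L \<subseteq> K \<Longrightarrow> K \<subseteq> H \<Longrightarrow> a \<in> carrier (R L) \<Longrightarrow>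
  tr T K H (tr T L K a) = tr T L H a" using trans_ax by blast
lemma nm_nm: "sg H \<Longrightarrow> sg K \<Longrightarrow> sg L \<Longrightarrow> L \<subseteq> K \<Longrightarrow> K \<subseteq> H \<Longrightarrow> a \<in> carrier (R L) \<Longrightarrow>
  nm T K H (nm T L K a) = nm T L H a" using trans_ax by blast
lemma cj_res: "g \<in> carrier G \<Longrightarrow> sg H \<Longrightarrow> sg K \<Longrightarrow> K \<subseteq> H \<Longrightarrow> a \<in> carrier (R H) \<Longrightarrow>
   cj T g K (res T K H a) = res T (conjg G g K) (conjg G g H) (cj T g H a)" using cj_rtn by blast
lemma cj_tr: "g \<in> carrier G \<Longrightarrow> sg H \<Longrightarrow> sg K \<Longrightarrow> K \<subseteq> H \<Longrightarrow> a \<in> carrier (R K) \<Longrightarrow>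
   cj T g H (tr T K H a) = tr T (conjg G g K) (conjg G g H) (cj T g K a)" using cj_rtn by blast
lemma cj_nm: "g \<in> carrier G \<Longrightarrow> sg H \<Longrightarrow> sg K \<Longrightarrow> K \<subseteq> H \<Longrightarrow> a \<in> carrier (R K) \<Longrightarrow>
   cj T g H (nm T K H a) = nm T (conjg G g K) (conjg G g H) (cj T g K a)" using cj_rtn by blast

lemma res_tr_dc: "sg H \<Longrightarrow> sg K \<Longrightarrow> sg L \<Longrightarrow> K \<subseteq> H \<Longrightarrow> L \<subseteq> H \<Longrightarrow> a \<in> carrier (R K) \<Longrightarrow>
           res T L H (tr T K H a) =
             finsum (R L)
               (\<lambda>D. let h = dcrep G H L K D; K' = conjg G (inv h) L \<inter> K in
                      tr T (L \<inter> conjg G h K) L (cj T h K' (res T K' K a)))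
               (dcosets G H L K)" using dc_ax by blast
lemma res_nm_dc: "sg H \<Longrightarrow> sg K \<Longrightarrow> sg L \<Longrightarrow> K \<subseteq> H \<Longrightarrow> L \<subseteq> H \<Longrightarrow> a \<in> carrier (R K) \<Longrightarrow>
           res T L H (nm T K H a) =
             finprod (R L)
               (\<lambda>D. let h = dcrep G H L K D; K' = conjg G (inv h) L \<inter> K in
                      nm T (L \<inter> conjg G h K) L (cj T h K' (res T K' K a)))
               (dcosets G H L K)" using dc_ax by blast

lemma dc_data: assumes H: "sg H" and L: "sg L" and K: "sg K" and LH: "L \<subseteq> H" and KH: "K \<subseteq> H"
  and D: "D \<in> dcosets G H L K"
  shows "dcrep G H L K D \<in> carrier G" "sg (conjg G (inv (dcrep G H L K D)) L \<inter> K)"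
    "conjg G (inv (dcrep G H L K D)) L \<inter> K \<subseteq> K"
    "sg (L \<inter> conjg G (dcrep G H L K D) K)" "L \<inter> conjg G (dcrep G H L K D) K \<subseteq> L"
    "conjg G (dcrep G H L K D) (conjg G (inv (dcrep G H L K D)) L \<inter> K) = L \<inter> conjg G (dcrep G H L K D) K"
proof -
  let ?h = "dcrep G H L K D"
  have h: "?h \<in> H" using dcrep_in[OF D] .
  show hc: "?h \<in> carrier G" using h sg_carrier[OF H] by blast
  have ihc: "inv ?h \<in> carrier G" using hc by simp
  show "sg (conjg G (inv ?h) L \<inter> K)" by (rule sg_Int[OF conjg_subgroup[OF ihc L] K])
  show "conjg G (inv ?h) L \<inter> K \<subseteq> K" by (rule Int_lower2)
  show "sg (L \<inter> conjg G ?h K)" by (rule sg_Int[OF L conjg_subgroup[OF hc K]])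
  show "L \<inter> conjg G ?h K \<subseteq> L" by (rule Int_lower1)
  show "conjg G ?h (conjg G (inv ?h) L \<inter> K) = L \<inter> conjg G ?h K"
    by (rule conjg_key[OF hc sg_carrier[OF L] sg_carrier[OF K]])
qed

end

locale tgen = tamb +
  fixes H0 and a
  assumes H0: "subgroup H0 G" and a_car: "a \<in> carrier (lev T H0)"
begin

definition B where
  "B L = {nm T L' L (cj T g H' (res T H' H0 a)) | L' g H'.
           sg L' \<and> L' \<subseteq> L \<and> sg H' \<and> H' \<subseteq> H0 \<and> g \<in> carrier G \<and> conjg G g H' = L'}"

definition M where
  "M L = {r \<otimes>\<^bsub>R L\<^esub> u | r u. r \<in> carrier (R L) \<and> u \<in> B L}"

lemma B_intro: "sg L' \<Longrightarrow> L' \<subseteq> L \<Longrightarrow> sg H' \<Longrightarrow> H' \<subseteq> H0 \<Longrightarrow> g \<in> carrier G \<Longrightarrow>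
   conjg G g H' = L' \<Longrightarrow> nm T L' L (cj T g H' (res T H' H0 a)) \<in> B L"
  unfolding B_def by blast

lemma B_elim: assumes "u \<in> B L"
  obtains L' g H' where "sg L'" "L' \<subseteq> L" "sg H'" "H' \<subseteq> H0" "g \<in> carrier G" "conjg G g H' = L'"
     "u = nm T L' L (cj T g H' (res T H' H0 a))"
  using assms unfolding B_def by blast

lemma M_intro: "r \<in> carrier (R L) \<Longrightarrow> u \<in> B L \<Longrightarrow> r \<otimes>\<^bsub>R L\<^esub> u \<in> M L"
  unfolding M_def by blast

lemma M_elim: assumes "m \<in> M L"
  obtains r u where "r \<in> carrier (R L)" "u \<in> B L" "m = r \<otimes>\<^bsub>R L\<^esub> u"
  using assms unfolding M_def by blast

lemma B_elem_carrier:
  assumes L: "sg L" and L': "sg L'" "L' \<subseteq> L" and H': "sg H'" "H' \<subseteq> H0" and g: "g \<in> carrier G"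
    and eq: "conjg G g H' = L'"
  shows "nm T L' L (cj T g H' (res T H' H0 a)) \<in> carrier (R L)"
proof -
  have "res T H' H0 a \<in> carrier (R H')" by (rule res_carrier[OF H0 H'(1) H'(2) a_car])
  then have "cj T g H' (res T H' H0 a) \<in> carrier (R L')" using cj_carrier[OF g H'(1)] eq by simp
  then show ?thesis by (rule nm_carrier[OF L L'])
qed

lemma B_carrier: "sg L \<Longrightarrow> u \<in> B L \<Longrightarrow> u \<in> carrier (R L)"
  by (erule B_elim) (simp add: B_elem_carrier)

lemma B_finite: "finite (B L)"
proof -
  have "B L \<subseteq> (\<lambda>(L', g, H'). nm T L' L (cj T g H' (res T H' H0 a))) ` (Pow (carrier G) \<times> carrier G \<times> Pow (carrier G))"
  proof
    fix u assume "u \<in> B L"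
    then obtain L' g H' where *: "sg L'" "sg H'" "g \<in> carrier G" "u = nm T L' L (cj T g H' (res T H' H0 a))"
      by (rule B_elim)
    have "(L', g, H') \<in> Pow (carrier G) \<times> carrier G \<times> Pow (carrier G)"
      using sg_carrier[OF *(1)] sg_carrier[OF *(2)] *(3) by blast
    then show "u \<in> (\<lambda>(L', g, H'). nm T L' L (cj T g H' (res T H' H0 a))) ` (Pow (carrier G) \<times> carrier G \<times> Pow (carrier G))"
      unfolding *(4) by (rule rev_image_eqI) simp
  qed
  moreover have "finite (Pow (carrier G) \<times> carrier G \<times> Pow (carrier G))" using finG by simp
  ultimately show ?thesis using finite_subset by blast
qed

lemma a_in_B: "a \<in> B H0"
proof -
  have one: "\<one> \<in> H0" by (rule subgroup.one_closed[OF H0])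
  have "conjg G \<one> H0 = H0" by (rule conjg_one[OF sg_carrier[OF H0]])
  moreover have "nm T H0 H0 (cj T \<one> H0 (res T H0 H0 a)) = a"
    using res_id[OF H0 a_car] cj_triv[OF H0 one a_car] nm_id[OF H0 a_car] by simp
  ultimately show ?thesis using B_intro[OF H0 subset_refl H0 subset_refl one_closed] by simp
qed

lemma B_nm: assumes L: "sg L" and L2: "sg L2" and LL: "L \<subseteq> L2" and u: "u \<in> B L"
  shows "nm T L L2 u \<in> B L2"
proof -
  obtain L' g H' where *: "sg L'" "L' \<subseteq> L" "sg H'" "H' \<subseteq> H0" "g \<in> carrier G" "conjg G g H' = L'"
     "u = nm T L' L (cj T g H' (res T H' H0 a))" using u by (rule B_elim)
  have c: "cj T g H' (res T H' H0 a) \<in> carrier (R L')"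
    using cj_carrier[OF *(5) *(3) res_carrier[OF H0 *(3) *(4) a_car]] *(6) by simp
  have "nm T L L2 u = nm T L' L2 (cj T g H' (res T H' H0 a))"
    using nm_nm[OF L2 L *(1) *(2) LL c] *(7) by simp
  moreover have "L' \<subseteq> L2" using *(2) LL by blast
  ultimately show ?thesis using B_intro[OF *(1) _ *(3) *(4) *(5) *(6)] by simp
qed

lemma B_cj: assumes k: "k \<in> carrier G" and L: "sg L" and u: "u \<in> B L"
  shows "cj T k L u \<in> B (conjg G k L)"
proof -
  obtain L' g H' where *: "sg L'" "L' \<subseteq> L" "sg H'" "H' \<subseteq> H0" "g \<in> carrier G" "conjg G g H' = L'"
     "u = nm T L' L (cj T g H' (res T H' H0 a))" using u by (rule B_elim)
  have w: "res T H' H0 a \<in> carrier (R H')" by (rule res_carrier[OF H0 *(3) *(4) a_car])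
  have c: "cj T g H' (res T H' H0 a) \<in> carrier (R L')"
    using cj_carrier[OF *(5) *(3) w] *(6) by simp
  have "cj T k L u = nm T (conjg G k L') (conjg G k L) (cj T k L' (cj T g H' (res T H' H0 a)))"
    using cj_nm[OF k L *(1) *(2) c] *(7) by simp
  also have "cj T k L' (cj T g H' (res T H' H0 a)) = cj T (k \<otimes> g) H' (res T H' H0 a)"
    using cj_comp[OF k *(5) *(3) w] *(6) by simp
  finally have e: "cj T k L u = nm T (conjg G k L') (conjg G k L) (cj T (k \<otimes> g) H' (res T H' H0 a))" .
  have "conjg G (k \<otimes> g) H' = conjg G k L'"
    using conjg_comp[OF k *(5) sg_carrier[OF *(3)]] *(6) by simp
  moreover have "sg (conjg G k L')" by (rule conjg_subgroup[OF k *(1)])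
  moreover have "conjg G k L' \<subseteq> conjg G k L" by (rule conjg_mono[OF *(2)])
  moreover have "k \<otimes> g \<in> carrier G" using k *(5) by simp
  ultimately show ?thesis unfolding e by (intro B_intro *(3,4)) simp_all
qed

lemma B_sub_M: "sg L \<Longrightarrow> u \<in> B L \<Longrightarrow> u \<in> M L"
proof -
  assume L: "sg L" and u: "u \<in> B L"
  interpret RL: cring "R L" by (rule cring_lev[OF L])
  have "u = \<one>\<^bsub>R L\<^esub> \<otimes>\<^bsub>R L\<^esub> u" using B_carrier[OF L u] by simp
  then show ?thesis using M_intro[OF _ u] by (metis RL.one_closed)
qed

lemma M_carrier: "sg L \<Longrightarrow> m \<in> M L \<Longrightarrow> m \<in> carrier (R L)"
proof -
  assume L: "sg L" and m: "m \<in> M L"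
  interpret RL: cring "R L" by (rule cring_lev[OF L])
  from m obtain r u where "r \<in> carrier (R L)" "u \<in> B L" "m = r \<otimes>\<^bsub>R L\<^esub> u" by (rule M_elim)
  then show ?thesis using B_carrier[OF L] by simp
qed

lemma M_mult: assumes L: "sg L" and x: "x \<in> carrier (R L)" and m: "m \<in> M L"
  shows "x \<otimes>\<^bsub>R L\<^esub> m \<in> M L"
proof -
  interpret RL: cring "R L" by (rule cring_lev[OF L])
  from m obtain r u where ru: "r \<in> carrier (R L)" "u \<in> B L" "m = r \<otimes>\<^bsub>R L\<^esub> u" by (rule M_elim)
  have "x \<otimes>\<^bsub>R L\<^esub> m = (x \<otimes>\<^bsub>R L\<^esub> r) \<otimes>\<^bsub>R L\<^esub> u" using ru x B_carrier[OF L ru(2)] by (simp add: RL.m_assoc)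
  moreover have "x \<otimes>\<^bsub>R L\<^esub> r \<in> carrier (R L)" using x ru by simp
  ultimately show ?thesis using M_intro[OF _ ru(2)] by simp
qed

lemma M_mult2: assumes L: "sg L" and x: "x \<in> carrier (R L)" and m: "m \<in> M L"
  shows "m \<otimes>\<^bsub>R L\<^esub> x \<in> M L"
proof -
  interpret RL: cring "R L" by (rule cring_lev[OF L])
  have "m \<otimes>\<^bsub>R L\<^esub> x = x \<otimes>\<^bsub>R L\<^esub> m" using x M_carrier[OF L m] by (simp add: RL.m_comm)
  then show ?thesis using M_mult[OF L x m] by simp
qed

end

context tgen begin

lemma B_res: assumes L: "sg L" and L2: "sg L2" and LL: "L2 \<subseteq> L" and u: "u \<in> B L"
  shows "res T L2 L u \<in> M L2"
proof -
  obtain L' g H' where *: "sg L'" "L' \<subseteq> L" "sg H'" "H' \<subseteq> H0" "g \<in> carrier G" "conjg G g H' = L'"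
     "u = nm T L' L (cj T g H' (res T H' H0 a))" using u by (rule B_elim)
  define w where "w = res T H' H0 a"
  have w: "w \<in> carrier (R H')" unfolding w_def by (rule res_carrier[OF H0 *(3) *(4) a_car])
  define z where "z = cj T g H' w"
  have z: "z \<in> carrier (R L')" using cj_carrier[OF *(5) *(3) w] *(6) unfolding z_def by simp
  define f where "f = (\<lambda>D. let h = dcrep G L L2 L' D; K' = conjg G (inv h) L2 \<inter> L' in
                      nm T (L2 \<inter> conjg G h L') L2 (cj T h K' (res T K' L' z)))"
  have eq: "res T L2 L u = finprod (R L2) f (dcosets G L L2 L')"
    unfolding f_def using res_nm_dc[OF L *(1) L2 *(2) LL z] *(7) unfolding z_def w_def by simp
  have fB: "f D \<in> B L2" if D: "D \<in> dcosets G L L2 L'" for D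
  proof -
    let ?h = "dcrep G L L2 L' D"
    let ?K' = "conjg G (inv ?h) L2 \<inter> L'"
    note dd = dc_data[OF L L2 *(1) LL *(2) D]
    have hc: "?h \<in> carrier G" by (rule dd(1))
    define Z where "Z = conjg G (inv g) ?K'"
    have gi: "inv g \<in> carrier G" using *(5) by simp
    have Zs: "sg Z" unfolding Z_def by (rule conjg_subgroup[OF gi dd(2)])
    have "Z \<subseteq> conjg G (inv g) L'" unfolding Z_def by (rule conjg_mono) blast
    also have "\<dots> = H'" using conjg_inv[OF *(5) sg_carrier[OF *(3)]] *(6) by simp
    finally have ZH: "Z \<subseteq> H'" .
    have K'eq: "?K' = conjg G g Z" unfolding Z_def
      using conjg_inv2[OF *(5) sg_carrier[OF dd(2)]] by simp
    have "res T ?K' L' z = res T (conjg G g Z) (conjg G g H') (cj T g H' w)"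
      using K'eq *(6) unfolding z_def by simp
    also have "\<dots> = cj T g Z (res T Z H' w)" using cj_res[OF *(5) *(3) Zs ZH w] by simp
    also have "res T Z H' w = res T Z H0 a" unfolding w_def
      using res_res[OF H0 *(3) Zs ZH *(4) a_car] .
    finally have r1: "res T ?K' L' z = cj T g Z (res T Z H0 a)" .
    have ZH0: "Z \<subseteq> H0" using ZH *(4) by blast
    have rz: "res T Z H0 a \<in> carrier (R Z)" by (rule res_carrier[OF H0 Zs ZH0 a_car])
    have "cj T ?h ?K' (res T ?K' L' z) = cj T ?h (conjg G g Z) (cj T g Z (res T Z H0 a))"
      using r1 K'eq by simp
    also have "\<dots> = cj T (?h \<otimes> g) Z (res T Z H0 a)" by (rule cj_comp[OF hc *(5) Zs rz])
    finally have r2: "cj T ?h ?K' (res T ?K' L' z) = cj T (?h \<otimes> g) Z (res T Z H0 a)" .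
    have cg: "conjg G (?h \<otimes> g) Z = L2 \<inter> conjg G ?h L'"
      using conjg_comp[OF hc *(5) sg_carrier[OF Zs]] K'eq dd(6) by simp
    have "f D = nm T (L2 \<inter> conjg G ?h L') L2 (cj T (?h \<otimes> g) Z (res T Z H0 a))"
      unfolding f_def Let_def using r2 by simp
    also have "\<dots> \<in> B L2"
      by (rule B_intro[OF dd(4) dd(5) Zs ZH0 _ cg]) (use hc *(5) in simp)
    finally show ?thesis .
  qed
  have fin: "finite (dcosets G L L2 L')" by (rule dcosets_finite[OF sg_carrier[OF L]])
  have ne: "dcosets G L L2 L' \<noteq> {}" by (rule dcosets_ne) (use subgroup.one_closed[OF L] in blast)
  then obtain D0 where D0: "D0 \<in> dcosets G L L2 L'" by blast
  have fc: "f \<in> dcosets G L L2 L' \<rightarrow> carrier (R L2)" using fB B_carrier[OF L2] by blast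
  obtain r where r: "r \<in> carrier (R L2)" "finprod (R L2) f (dcosets G L L2 L') = r \<otimes>\<^bsub>R L2\<^esub> f D0"
    using finprod_pick[OF cring_lev[OF L2] fin D0 fc] by blast
  show ?thesis unfolding eq r(2) by (rule M_intro[OF r(1) fB[OF D0]])
qed

lemma M_res: assumes L: "sg L" and L2: "sg L2" and LL: "L2 \<subseteq> L" and m: "m \<in> M L"
  shows "res T L2 L m \<in> M L2"
proof -
  obtain r u where ru: "r \<in> carrier (R L)" "u \<in> B L" "m = r \<otimes>\<^bsub>R L\<^esub> u" using m by (rule M_elim)
  have "res T L2 L m = res T L2 L r \<otimes>\<^bsub>R L2\<^esub> res T L2 L u"
    unfolding ru(3) by (rule res_mult[OF L L2 LL ru(1) B_carrier[OF L ru(2)]])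
  then show ?thesis using M_mult[OF L2 res_carrier[OF L L2 LL ru(1)] B_res[OF L L2 LL ru(2)]] by simp
qed

lemma M_cj: assumes k: "k \<in> carrier G" and L: "sg L" and m: "m \<in> M L"
  shows "cj T k L m \<in> M (conjg G k L)"
proof -
  obtain r u where ru: "r \<in> carrier (R L)" "u \<in> B L" "m = r \<otimes>\<^bsub>R L\<^esub> u" using m by (rule M_elim)
  have "cj T k L m = cj T k L r \<otimes>\<^bsub>R (conjg G k L)\<^esub> cj T k L u"
    unfolding ru(3) by (rule cj_mult[OF k L ru(1) B_carrier[OF L ru(2)]])
  then show ?thesis using M_intro[OF cj_carrier[OF k L ru(1)] B_cj[OF k L ru(2)]] by simp
qed

lemma M_nm: assumes L: "sg L" and L2: "sg L2" and LL: "L \<subseteq> L2" and m: "m \<in> M L"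
  shows "nm T L L2 m \<in> M L2"
proof -
  obtain r u where ru: "r \<in> carrier (R L)" "u \<in> B L" "m = r \<otimes>\<^bsub>R L\<^esub> u" using m by (rule M_elim)
  have "nm T L L2 m = nm T L L2 r \<otimes>\<^bsub>R L2\<^esub> nm T L L2 u"
    unfolding ru(3) by (rule nm_mult[OF L2 L LL ru(1) B_carrier[OF L ru(2)]])
  then show ?thesis using M_intro[OF nm_carrier[OF L2 L LL ru(1)] B_nm[OF L L2 LL ru(2)]] by simp
qed

end

context tgen begin

inductive inJ where
  J0: "inJ L \<zero>\<^bsub>R L\<^esub>"
| Jstep: "sg L' \<Longrightarrow> L' \<subseteq> L \<Longrightarrow> m \<in> M L' \<Longrightarrow> inJ L j \<Longrightarrow> inJ L (tr T L' L m \<oplus>\<^bsub>R L\<^esub> j)"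

lemma J_carrier: "inJ L x \<Longrightarrow> sg L \<Longrightarrow> x \<in> carrier (R L)"
proof (induction rule: inJ.induct)
  case (J0 L)
  then show ?case using cring.axioms(1)[OF cring_lev] ring.ring_simprules(2) by blast
next
  case (Jstep L' L m j)
  interpret RL: cring "R L" by (rule cring_lev[OF Jstep.prems])
  have "tr T L' L m \<in> carrier (R L)"
    by (rule tr_carrier[OF Jstep.prems Jstep.hyps(1,2) M_carrier[OF Jstep.hyps(1,3)]])
  then show ?case using Jstep.IH Jstep.prems by simp
qed

lemma J_add: "inJ L x \<Longrightarrow> sg L \<Longrightarrow> inJ L y \<Longrightarrow> inJ L (x \<oplus>\<^bsub>R L\<^esub> y)"
proof (induction rule: inJ.induct)
  case (J0 L)
  interpret RL: cring "R L" by (rule cring_lev[OF J0.prems(1)])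
  show ?case using J_carrier[OF J0.prems(2) J0.prems(1)] J0.prems(2) by simp
next
  case (Jstep L' L m j)
  interpret RL: cring "R L" by (rule cring_lev[OF Jstep.prems(1)])
  have t: "tr T L' L m \<in> carrier (R L)"
    by (rule tr_carrier[OF Jstep.prems(1) Jstep.hyps(1,2) M_carrier[OF Jstep.hyps(1,3)]])
  have "tr T L' L m \<oplus>\<^bsub>R L\<^esub> j \<oplus>\<^bsub>R L\<^esub> y = tr T L' L m \<oplus>\<^bsub>R L\<^esub> (j \<oplus>\<^bsub>R L\<^esub> y)"
    using t J_carrier[OF Jstep.hyps(4) Jstep.prems(1)] J_carrier[OF Jstep.prems(2,1)] by (simp add: RL.a_assoc)
  then show ?case using inJ.Jstep[OF Jstep.hyps(1,2,3) Jstep.IH[OF Jstep.prems]] by simp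
qed

lemma J_tr1: assumes L: "sg L" and L': "sg L'" "L' \<subseteq> L" and m: "m \<in> M L'"
  shows "inJ L (tr T L' L m)"
proof -
  interpret RL: cring "R L" by (rule cring_lev[OF L])
  have "tr T L' L m \<in> carrier (R L)" by (rule tr_carrier[OF L L' M_carrier[OF L'(1) m]])
  then have "tr T L' L m = tr T L' L m \<oplus>\<^bsub>R L\<^esub> \<zero>\<^bsub>R L\<^esub>" by simp
  then show ?thesis using inJ.Jstep[OF L' m inJ.J0] by simp
qed

lemma J_M: assumes L: "sg L" and m: "m \<in> M L" shows "inJ L m"
  using J_tr1[OF L L subset_refl m] tr_id[OF L M_carrier[OF L m]] by simp

lemma J_mul: "inJ L x \<Longrightarrow> sg L \<Longrightarrow> c \<in> carrier (R L) \<Longrightarrow> inJ L (c \<otimes>\<^bsub>R L\<^esub> x)"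
proof (induction rule: inJ.induct)
  case (J0 L)
  interpret RL: cring "R L" by (rule cring_lev[OF J0.prems(1)])
  show ?case using J0.prems(2) inJ.J0[of L] by simp
next
  case (Jstep L' L m j)
  interpret RL: cring "R L" by (rule cring_lev[OF Jstep.prems(1)])
  have mc: "m \<in> carrier (R L')" by (rule M_carrier[OF Jstep.hyps(1,3)])
  have t: "tr T L' L m \<in> carrier (R L)"
    by (rule tr_carrier[OF Jstep.prems(1) Jstep.hyps(1,2) mc])
  have jc: "j \<in> carrier (R L)" by (rule J_carrier[OF Jstep.hyps(4) Jstep.prems(1)])
  have "c \<otimes>\<^bsub>R L\<^esub> (tr T L' L m \<oplus>\<^bsub>R L\<^esub> j) = tr T L' L m \<otimes>\<^bsub>R L\<^esub> c \<oplus>\<^bsub>R L\<^esub> c \<otimes>\<^bsub>R L\<^esub> j"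
    using t jc Jstep.prems(2) by (simp add: RL.r_distr RL.m_comm)
  also have "tr T L' L m \<otimes>\<^bsub>R L\<^esub> c = tr T L' L (m \<otimes>\<^bsub>R L'\<^esub> res T L' L c)"
    by (rule frob[OF Jstep.prems(1) Jstep.hyps(1,2) mc Jstep.prems(2)])
  finally have e: "c \<otimes>\<^bsub>R L\<^esub> (tr T L' L m \<oplus>\<^bsub>R L\<^esub> j) =
     tr T L' L (m \<otimes>\<^bsub>R L'\<^esub> res T L' L c) \<oplus>\<^bsub>R L\<^esub> c \<otimes>\<^bsub>R L\<^esub> j" .
  have "m \<otimes>\<^bsub>R L'\<^esub> res T L' L c \<in> M L'"
    by (rule M_mult2[OF Jstep.hyps(1) res_carrier[OF Jstep.prems(1) Jstep.hyps(1,2) Jstep.prems(2)] Jstep.hyps(3)])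
  then show ?case unfolding e by (rule inJ.Jstep[OF Jstep.hyps(1,2) _ Jstep.IH[OF Jstep.prems]])
qed

definition Jset where "Jset L = {x. inJ L x}"

lemma J_ideal: assumes L: "sg L" shows "ideal (Jset L) (R L)"
proof (rule ideal_intro_cring[OF cring_lev[OF L]])
  show "Jset L \<subseteq> carrier (R L)" unfolding Jset_def using J_carrier L by blast
  show "\<zero>\<^bsub>R L\<^esub> \<in> Jset L" unfolding Jset_def by (simp add: inJ.J0)
  show "a \<oplus>\<^bsub>R L\<^esub> b \<in> Jset L" if "a \<in> Jset L" "b \<in> Jset L" for a b
    using that J_add L unfolding Jset_def by blast
  show "x \<otimes>\<^bsub>R L\<^esub> a \<in> Jset L" if "a \<in> Jset L" "x \<in> carrier (R L)" for a x
    using that J_mul L unfolding Jset_def by blast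
qed

lemma J_tr: "inJ K x \<Longrightarrow> sg K \<Longrightarrow> sg L \<Longrightarrow> K \<subseteq> L \<Longrightarrow> inJ L (tr T K L x)"
proof (induction rule: inJ.induct)
  case (J0 K)
  show ?case using tr_zero[OF J0.prems(2,1,3)] inJ.J0[of L] by simp
next
  case (Jstep L' K m j)
  have mc: "m \<in> carrier (R L')" by (rule M_carrier[OF Jstep.hyps(1,3)])
  have t: "tr T L' K m \<in> carrier (R K)" by (rule tr_carrier[OF Jstep.prems(1) Jstep.hyps(1,2) mc])
  have jc: "j \<in> carrier (R K)" by (rule J_carrier[OF Jstep.hyps(4) Jstep.prems(1)])
  have "tr T K L (tr T L' K m \<oplus>\<^bsub>R K\<^esub> j) = tr T K L (tr T L' K m) \<oplus>\<^bsub>R L\<^esub> tr T K L j"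
    by (rule tr_add[OF Jstep.prems(2,1,3) t jc])
  also have "tr T K L (tr T L' K m) = tr T L' L m"
    by (rule tr_tr[OF Jstep.prems(2,1) Jstep.hyps(1,2) Jstep.prems(3) mc])
  finally have e: "tr T K L (tr T L' K m \<oplus>\<^bsub>R K\<^esub> j) = tr T L' L m \<oplus>\<^bsub>R L\<^esub> tr T K L j" .
  have "L' \<subseteq> L" using Jstep.hyps(2) Jstep.prems(3) by blast
  then show ?case unfolding e using inJ.Jstep[OF Jstep.hyps(1) _ Jstep.hyps(3) Jstep.IH[OF Jstep.prems]] by blast
qed

lemma J_cj: "inJ L x \<Longrightarrow> sg L \<Longrightarrow> k \<in> carrier G \<Longrightarrow> inJ (conjg G k L) (cj T k L x)"
proof (induction rule: inJ.induct)
  case (J0 L)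
  show ?case using cj_zero[OF J0.prems(2,1)] inJ.J0 by simp
next
  case (Jstep L' L m j)
  have mc: "m \<in> carrier (R L')" by (rule M_carrier[OF Jstep.hyps(1,3)])
  have t: "tr T L' L m \<in> carrier (R L)" by (rule tr_carrier[OF Jstep.prems(1) Jstep.hyps(1,2) mc])
  have jc: "j \<in> carrier (R L)" by (rule J_carrier[OF Jstep.hyps(4) Jstep.prems(1)])
  have "cj T k L (tr T L' L m \<oplus>\<^bsub>R L\<^esub> j) = cj T k L (tr T L' L m) \<oplus>\<^bsub>R (conjg G k L)\<^esub> cj T k L j"
    by (rule cj_add[OF Jstep.prems(2,1) t jc])
  also have "cj T k L (tr T L' L m) = tr T (conjg G k L') (conjg G k L) (cj T k L' m)"
    by (rule cj_tr[OF Jstep.prems(2,1) Jstep.hyps(1,2) mc])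
  finally have e: "cj T k L (tr T L' L m \<oplus>\<^bsub>R L\<^esub> j) =
      tr T (conjg G k L') (conjg G k L) (cj T k L' m) \<oplus>\<^bsub>R (conjg G k L)\<^esub> cj T k L j" .
  show ?case unfolding e
    by (rule inJ.Jstep[OF conjg_subgroup[OF Jstep.prems(2) Jstep.hyps(1)] conjg_mono[OF Jstep.hyps(2)]
          M_cj[OF Jstep.prems(2) Jstep.hyps(1,3)] Jstep.IH[OF Jstep.prems]])
qed

lemma J_finsum: assumes L: "sg L" and f: "\<And>x. x \<in> A \<Longrightarrow> inJ L (f x)"
  shows "inJ L (finsum (R L) f A)"
  using ideal_finsum[OF cring.axioms(1)[OF cring_lev[OF L]] J_ideal[OF L], of A f] f unfolding Jset_def by blast

lemma J_finprod: assumes L: "sg L" and A: "finite A" "A \<noteq> {}" and f: "\<And>x. x \<in> A \<Longrightarrow> inJ L (f x)"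
  shows "inJ L (finprod (R L) f A)"
proof -
  obtain x where x: "x \<in> A" using A(2) by blast
  have fc: "f \<in> A \<rightarrow> carrier (R L)" using f J_carrier L by blast
  show ?thesis using ideal_finprod[OF cring_lev[OF L] J_ideal[OF L] A(1) x fc] f[OF x] unfolding Jset_def by blast
qed

lemma J_res: "inJ L x \<Longrightarrow> sg L \<Longrightarrow> sg L2 \<Longrightarrow> L2 \<subseteq> L \<Longrightarrow> inJ L2 (res T L2 L x)"
proof (induction rule: inJ.induct)
  case (J0 L)
  show ?case using res_zero[OF J0.prems] inJ.J0 by simp
next
  case (Jstep L' L m j)
  have mc: "m \<in> carrier (R L')" by (rule M_carrier[OF Jstep.hyps(1,3)])
  have t: "tr T L' L m \<in> carrier (R L)" by (rule tr_carrier[OF Jstep.prems(1) Jstep.hyps(1,2) mc])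
  have jc: "j \<in> carrier (R L)" by (rule J_carrier[OF Jstep.hyps(4) Jstep.prems(1)])
  have e: "res T L2 L (tr T L' L m \<oplus>\<^bsub>R L\<^esub> j) = res T L2 L (tr T L' L m) \<oplus>\<^bsub>R L2\<^esub> res T L2 L j"
    by (rule res_add[OF Jstep.prems t jc])
  have "inJ L2 (res T L2 L (tr T L' L m))"
  proof -
    have eq: "res T L2 L (tr T L' L m) = finsum (R L2)
               (\<lambda>D. let h = dcrep G L L2 L' D; K' = conjg G (inv h) L2 \<inter> L' in
                      tr T (L2 \<inter> conjg G h L') L2 (cj T h K' (res T K' L' m)))
               (dcosets G L L2 L')"
      by (rule res_tr_dc[OF Jstep.prems(1) Jstep.hyps(1) Jstep.prems(2) Jstep.hyps(2) Jstep.prems(3) mc])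
    show ?thesis unfolding eq
    proof (rule J_finsum[OF Jstep.prems(2)])
      fix D assume D: "D \<in> dcosets G L L2 L'"
      note dd = dc_data[OF Jstep.prems(1,2) Jstep.hyps(1) Jstep.prems(3) Jstep.hyps(2) D]
      let ?h = "dcrep G L L2 L' D"
      let ?K' = "conjg G (inv ?h) L2 \<inter> L'"
      have "res T ?K' L' m \<in> M ?K'" by (rule M_res[OF Jstep.hyps(1) dd(2,3) Jstep.hyps(3)])
      then have "cj T ?h ?K' (res T ?K' L' m) \<in> M (L2 \<inter> conjg G ?h L')"
        using M_cj[OF dd(1) dd(2)] dd(6) by metis
      then show "inJ L2 (let h = ?h; K' = conjg G (inv h) L2 \<inter> L' in tr T (L2 \<inter> conjg G h L') L2 (cj T h K' (res T K' L' m)))"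
        unfolding Let_def by (rule J_tr1[OF Jstep.prems(2) dd(4,5)])
    qed
  qed
  then show ?case unfolding e by (rule J_add[OF _ Jstep.prems(2) Jstep.IH[OF Jstep.prems]])
qed

end

context tamb begin

lemma lcos_self: "sg K \<Longrightarrow> k \<in> K \<Longrightarrow> k <# K = K"
proof -
  assume K: "sg K" and k: "k \<in> K"
  have "k \<in> \<one> <# K" using k lcos_mult_one[OF sg_carrier[OF K]] by simp
  then have "\<one> <# K = k <# K" by (rule l_repr_independence[OF _ one_closed K])
  then show ?thesis using lcos_mult_one[OF sg_carrier[OF K]] by simp
qed

lemma cosets_mult: assumes H: "sg H" and K: "K \<subseteq> carrier G" and h: "h \<in> H" and x: "x \<in> cosets_in G H K"
  shows "h <# x \<in> cosets_in G H K"
proof -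
  obtain h1 where h1: "h1 \<in> H" "x = h1 <# K" using x unfolding cosets_in_def by blast
  have c: "h \<in> carrier G" "h1 \<in> carrier G" using h h1 sg_carrier[OF H] by auto
  have "h <# x = (h \<otimes> h1) <# K" unfolding h1(2) by (rule lcos_m_assoc[OF K c])
  moreover have "h \<otimes> h1 \<in> H" using subgroup.m_closed[OF H h h1(1)] .
  ultimately show ?thesis unfolding cosets_in_def by blast
qed

lemma cosets_sub: assumes H: "sg H" and K: "K \<subseteq> carrier G" and x: "x \<in> cosets_in G H K"
  shows "x \<subseteq> carrier G"
proof -
  obtain h1 where h1: "h1 \<in> H" "x = h1 <# K" using x unfolding cosets_in_def by blast
  have "h1 \<in> carrier G" using h1 sg_carrier[OF H] by auto
  then show ?thesis unfolding h1(2) by (rule l_coset_subset_G[OF K])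
qed

lemma lcos_in_cosets: "h \<in> H \<Longrightarrow> h <# K \<in> cosets_in G H K"
  unfolding cosets_in_def by blast

lemma bool_stab_sg: assumes H: "sg H" and K: "K \<subseteq> carrier G"
  shows "sg (bool_stab G H K s)"
proof (rule subgroupI)
  let ?S = "bool_stab G H K s"
  show "?S \<subseteq> carrier G" unfolding bool_stab_def using sg_carrier[OF H] by blast
  have "\<one> \<in> ?S" unfolding bool_stab_def
    using subgroup.one_closed[OF H] cosets_sub[OF H K] lcos_mult_one by simp
  then show "?S \<noteq> {}" by blast
  fix x y assume x: "x \<in> ?S" and y: "y \<in> ?S"
  have xH: "x \<in> H" and yH: "y \<in> H" using x y unfolding bool_stab_def by auto
  have xc: "x \<in> carrier G" and yc: "y \<in> carrier G" using xH yH sg_carrier[OF H] by auto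
  show "inv x \<in> ?S" unfolding bool_stab_def
  proof (intro CollectI conjI ballI)
    show "inv x \<in> H" by (rule subgroup.m_inv_closed[OF H xH])
    fix c assume c: "c \<in> cosets_in G H K"
    have c2: "inv x <# c \<in> cosets_in G H K" by (rule cosets_mult[OF H K subgroup.m_inv_closed[OF H xH] c])
    have "s (x <# (inv x <# c)) = s (inv x <# c)" using x c2 unfolding bool_stab_def by blast
    moreover have "x <# (inv x <# c) = c"
      using lcos_m_assoc[OF cosets_sub[OF H K c] xc inv_closed[OF xc]] lcos_mult_one[OF cosets_sub[OF H K c]] xc by simp
    ultimately show "s (inv x <# c) = s c" by simp
  qed
  show "x \<otimes> y \<in> ?S" unfolding bool_stab_def
  proof (intro CollectI conjI ballI)
    show "x \<otimes> y \<in> H" by (rule subgroup.m_closed[OF H xH yH])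
    fix c assume c: "c \<in> cosets_in G H K"
    have c2: "y <# c \<in> cosets_in G H K" by (rule cosets_mult[OF H K yH c])
    have "(x \<otimes> y) <# c = x <# (y <# c)" using lcos_m_assoc[OF cosets_sub[OF H K c] xc yc] by simp
    then show "s ((x \<otimes> y) <# c) = s c" using x y c c2 unfolding bool_stab_def by simp
  qed
qed

lemma sec_stab_sg: assumes H: "sg H" and K: "K \<subseteq> carrier G"
  and sc: "\<And>x. x \<in> cosets_in G H K \<Longrightarrow> s x \<subseteq> carrier G"
  shows "sg (sec_stab G H K s)"
proof (rule subgroupI)
  let ?S = "sec_stab G H K s"
  show "?S \<subseteq> carrier G" unfolding sec_stab_def using sg_carrier[OF H] by blast
  have "\<one> \<in> ?S" unfolding sec_stab_def
    using subgroup.one_closed[OF H] cosets_sub[OF H K] lcos_mult_one sc by simp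
  then show "?S \<noteq> {}" by blast
  fix x y assume x: "x \<in> ?S" and y: "y \<in> ?S"
  have xH: "x \<in> H" and yH: "y \<in> H" using x y unfolding sec_stab_def by auto
  have xc: "x \<in> carrier G" and yc: "y \<in> carrier G" using xH yH sg_carrier[OF H] by auto
  show "inv x \<in> ?S" unfolding sec_stab_def
  proof (intro CollectI conjI ballI)
    show "inv x \<in> H" by (rule subgroup.m_inv_closed[OF H xH])
    fix c assume c: "c \<in> cosets_in G H K"
    have c2: "inv x <# c \<in> cosets_in G H K" by (rule cosets_mult[OF H K subgroup.m_inv_closed[OF H xH] c])
    have e1: "x <# s (inv x <# c) = s (x <# (inv x <# c))" using x c2 unfolding sec_stab_def by blast
    have e2: "x <# (inv x <# c) = c"
      using lcos_m_assoc[OF cosets_sub[OF H K c] xc inv_closed[OF xc]] lcos_mult_one[OF cosets_sub[OF H K c]] xc by simp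
    have "inv x <# s c = inv x <# (x <# s (inv x <# c))" using e1 e2 by simp
    also have "\<dots> = s (inv x <# c)"
      using lcos_m_assoc[OF sc[OF c2] inv_closed[OF xc] xc] lcos_mult_one[OF sc[OF c2]] xc by simp
    finally show "inv x <# s c = s (inv x <# c)" .
  qed
  show "x \<otimes> y \<in> ?S" unfolding sec_stab_def
  proof (intro CollectI conjI ballI)
    show "x \<otimes> y \<in> H" by (rule subgroup.m_closed[OF H xH yH])
    fix c assume c: "c \<in> cosets_in G H K"
    have c2: "y <# c \<in> cosets_in G H K" by (rule cosets_mult[OF H K yH c])
    have "(x \<otimes> y) <# s c = x <# (y <# s c)" using lcos_m_assoc[OF sc[OF c] xc yc] by simp
    also have "\<dots> = x <# s (y <# c)" using y c unfolding sec_stab_def by simp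
    also have "\<dots> = s (x <# (y <# c))" using x c2 unfolding sec_stab_def by simp
    also have "x <# (y <# c) = (x \<otimes> y) <# c" using lcos_m_assoc[OF cosets_sub[OF H K c] xc yc] by simp
    finally show "(x \<otimes> y) <# s c = s ((x \<otimes> y) <# c)" .
  qed
qed

lemma sec_orbit_some: assumes H: "sg H" and K: "K \<subseteq> carrier G" and L: "sg L" and Ob: "Ob \<in> sec_orbits G H K L"
  shows "(SOME s. s \<in> Ob) \<in> Ob"
    "\<And>x. x \<in> cosets_in G H K \<Longrightarrow> \<exists>h'\<in>H. (SOME s. s \<in> Ob) x = h' <# L"
proof -
  obtain s0 where s0: "s0 \<in> sections G H K L" "Ob = {sec_act G H K h s0 | h. h \<in> H}"
    using Ob unfolding sec_orbits_def by blast
  have "sec_act G H K \<one> s0 \<in> Ob" using s0(2) subgroup.one_closed[OF H] by blast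
  then show some: "(SOME s. s \<in> Ob) \<in> Ob" by (rule someI[where P="\<lambda>s. s \<in> Ob"])
  then obtain h where h: "h \<in> H" "(SOME s. s \<in> Ob) = sec_act G H K h s0" using s0(2) by blast
  fix x assume x: "x \<in> cosets_in G H K"
  have hc: "h \<in> carrier G" using h sg_carrier[OF H] by blast
  have y: "inv h <# x \<in> cosets_in G H K" by (rule cosets_mult[OF H K subgroup.m_inv_closed[OF H h(1)] x])
  have "s0 (inv h <# x) \<in> cosets_in G H L" using s0(1) y unfolding sections_def by blast
  then obtain h2 where h2: "h2 \<in> H" "s0 (inv h <# x) = h2 <# L" unfolding cosets_in_def by blast
  have h2c: "h2 \<in> carrier G" using h2 sg_carrier[OF H] by blast
  have "(SOME s. s \<in> Ob) x = h <# (h2 <# L)" using h(2) x h2(2) unfolding sec_act_def by simp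
  also have "\<dots> = (h \<otimes> h2) <# L" by (rule lcos_m_assoc[OF sg_carrier[OF L] hc h2c])
  finally show "\<exists>h'\<in>H. (SOME s. s \<in> Ob) x = h' <# L"
    using subgroup.m_closed[OF H h(1) h2(1)] by blast
qed

lemma sec_containment:
  assumes H: "sg H" and K: "sg K" and L: "sg L"
    and sc: "\<And>x. x \<in> cosets_in G H K \<Longrightarrow> s x \<subseteq> carrier G"
    and h: "h \<in> H" and h': "h' \<in> H" and eq: "s (h <# K) = h' <# L"
  shows "sec_stab G H K s \<inter> conjg G h K \<subseteq> conjg G h' L"
proof
  fix m assume m: "m \<in> sec_stab G H K s \<inter> conjg G h K"
  have Kc: "K \<subseteq> carrier G" by (rule sg_carrier[OF K])
  have Lc: "L \<subseteq> carrier G" by (rule sg_carrier[OF L])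
  have hc: "h \<in> carrier G" and h'c: "h' \<in> carrier G" using h h' sg_carrier[OF H] by auto
  have mH: "m \<in> H" using m unfolding sec_stab_def by blast
  have mc: "m \<in> carrier G" using mH sg_carrier[OF H] by blast
  have "inv h \<otimes> m \<otimes> h \<in> K" using m conjg_mem_iff[OF hc Kc mc] by blast
  then obtain k where k: "k \<in> K" "inv h \<otimes> m \<otimes> h = k" by blast
  have kc: "k \<in> carrier G" using k Kc by blast
  have mh: "m \<otimes> h = h \<otimes> k" using k(2) hc mc
    by (metis cancel2 inv_closed m_assoc m_closed)
  have "m <# (h <# K) = (m \<otimes> h) <# K" by (rule lcos_m_assoc[OF Kc mc hc])
  also have "\<dots> = h <# (k <# K)" unfolding mh using lcos_m_assoc[OF Kc hc kc] by simp
  also have "\<dots> = h <# K" using lcos_self[OF K k(1)] by simp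
  finally have fix1: "m <# (h <# K) = h <# K" .
  have hK: "h <# K \<in> cosets_in G H K" by (rule lcos_in_cosets[OF h])
  have "m <# s (h <# K) = s (m <# (h <# K))" using m hK unfolding sec_stab_def by blast
  then have "m <# (h' <# L) = h' <# L" using fix1 eq by simp
  then have e: "(m \<otimes> h') <# L = h' <# L" using lcos_m_assoc[OF Lc mc h'c] by simp
  have "m \<otimes> h' \<in> (m \<otimes> h') <# L"
    unfolding l_coset_def using subgroup.one_closed[OF L] mc h'c
    by (intro UN_I[of "\<one>"]) auto
  then have "m \<otimes> h' \<in> h' <# L" using e by simp
  then obtain l where l: "l \<in> L" "m \<otimes> h' = h' \<otimes> l" unfolding l_coset_def by blast
  have lc: "l \<in> carrier G" using l Lc by blast
  have "inv h' \<otimes> m \<otimes> h' = l" using l(2) h'c mc lc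
    by (metis cancel1 inv_closed m_assoc)
  then show "m \<in> conjg G h' L" using conjg_mem_iff[OF h'c Lc mc] l(1) by simp
qed

end

context tgen begin

lemma J_nm_tr: assumes H: "sg H" and K: "sg K" and L': "sg L'" and L'K: "L' \<subseteq> K" and KH: "K \<subseteq> H"
  and m: "m \<in> M L'"
  shows "inJ H (nm T K H (tr T L' K m))"
proof -
  have mc: "m \<in> carrier (R L')" by (rule M_carrier[OF L' m])
  have Kc: "K \<subseteq> carrier G" by (rule sg_carrier[OF K])
  define F where "F = (\<lambda>Ob. let s = (SOME s. s \<in> Ob); M = sec_stab G H K s in
                  tr T M H
                    (finprod (R M)
                       (\<lambda>D. let h = dcrep G H M K D;
                               h' = (SOME h'. h' \<in> H \<and> s (h <# K) = h' <# L') in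
                          nm T (M \<inter> conjg G h K) M
                            (res T (M \<inter> conjg G h K) (conjg G h' L') (cj T h' L' m)))
                       (dcosets G H M K)))"
  have eq: "nm T K H (tr T L' K m) = finsum (R H) F (sec_orbits G H K L')"
    unfolding F_def by (rule nm_tr_ax[OF H K L' L'K KH mc])
  have "inJ H (F Ob)" if Ob: "Ob \<in> sec_orbits G H K L'" for Ob
  proof -
    define s where "s = (SOME s. s \<in> Ob)"
    have sprop: "\<And>x. x \<in> cosets_in G H K \<Longrightarrow> \<exists>h'\<in>H. s x = h' <# L'"
      unfolding s_def by (rule sec_orbit_some(2)[OF H Kc L' Ob])
    have sc: "s x \<subseteq> carrier G" if x: "x \<in> cosets_in G H K" for x
    proof -
      obtain h' where h': "h' \<in> H" "s x = h' <# L'" using sprop[OF x] by blast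
      show ?thesis unfolding h'(2) by (rule l_coset_subset_G[OF sg_carrier[OF L']]) (use h' sg_carrier[OF H] in blast)
    qed
    define Ms where "Ms = sec_stab G H K s"
    have Msg: "sg Ms" unfolding Ms_def by (rule sec_stab_sg[OF H Kc sc])
    have MH: "Ms \<subseteq> H" unfolding Ms_def sec_stab_def by blast
    define f where "f = (\<lambda>D. let h = dcrep G H Ms K D;
                               h' = (SOME h'. h' \<in> H \<and> s (h <# K) = h' <# L') in
                          nm T (Ms \<inter> conjg G h K) Ms
                            (res T (Ms \<inter> conjg G h K) (conjg G h' L') (cj T h' L' m)))"
    have fin: "finite (dcosets G H Ms K)" by (rule dcosets_finite[OF sg_carrier[OF H]])
    have ne: "dcosets G H Ms K \<noteq> {}" by (rule dcosets_ne) (use subgroup.one_closed[OF H] in blast)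
    have "inJ Ms (finprod (R Ms) f (dcosets G H Ms K))"
    proof (rule J_finprod[OF Msg fin ne])
      fix D assume D: "D \<in> dcosets G H Ms K"
      define h where "h = dcrep G H Ms K D"
      have hH: "h \<in> H" unfolding h_def by (rule dcrep_in[OF D])
      have hc: "h \<in> carrier G" using hH sg_carrier[OF H] by blast
      have ex: "\<exists>h'. h' \<in> H \<and> s (h <# K) = h' <# L'" using sprop[OF lcos_in_cosets[OF hH]] by blast
      define h' where "h' = (SOME h'. h' \<in> H \<and> s (h <# K) = h' <# L')"
      have h'p: "h' \<in> H \<and> s (h <# K) = h' <# L'" unfolding h'_def by (rule someI_ex[OF ex])
      have h'c: "h' \<in> carrier G" using h'p sg_carrier[OF H] by blast
      define X where "X = Ms \<inter> conjg G h K"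
      have Xs: "sg X" unfolding X_def by (rule sg_Int[OF Msg conjg_subgroup[OF hc K]])
      have XM: "X \<subseteq> Ms" unfolding X_def by blast
      have Xc: "X \<subseteq> conjg G h' L'" unfolding X_def Ms_def
        by (rule sec_containment[OF H K L' sc hH]) (use h'p in auto)
      have cs: "sg (conjg G h' L')" by (rule conjg_subgroup[OF h'c L'])
      have "cj T h' L' m \<in> M (conjg G h' L')" by (rule M_cj[OF h'c L' m])
      then have "res T X (conjg G h' L') (cj T h' L' m) \<in> M X" by (rule M_res[OF cs Xs Xc])
      then have "nm T X Ms (res T X (conjg G h' L') (cj T h' L' m)) \<in> M Ms" by (rule M_nm[OF Xs Msg XM])
      then have "inJ Ms (nm T X Ms (res T X (conjg G h' L') (cj T h' L' m)))" by (rule J_M[OF Msg])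
      then show "inJ Ms (f D)" unfolding f_def Let_def h_def[symmetric] h'_def[symmetric] X_def[symmetric] .
    qed
    then have "inJ H (tr T Ms H (finprod (R Ms) f (dcosets G H Ms K)))" by (rule J_tr[OF _ Msg H MH])
    then show ?thesis unfolding F_def Let_def s_def[symmetric] Ms_def[symmetric] by (simp only: f_def Let_def)
  qed
  then show ?thesis unfolding eq by (rule J_finsum[OF H])
qed


lemma J_nm_aux: "\<forall>H K x. card H = n \<longrightarrow> sg H \<longrightarrow> sg K \<longrightarrow> K \<subseteq> H \<longrightarrow> inJ K x \<longrightarrow> inJ H (nm T K H x)"
proof (induction n rule: less_induct)
  case (less n)
  show ?case
  proof (intro allI impI)
    fix H K x assume cardH: "card H = n" and H: "sg H" and K: "sg K" and KH: "K \<subseteq> H" and x: "inJ K x"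
    have Kc: "K \<subseteq> carrier G" by (rule sg_carrier[OF K])
    have IH: "inJ H' (nm T K' H' y)" if "card H' < card H" "sg H'" "sg K'" "K' \<subseteq> H'" "inJ K' y" for H' K' y
      using less[rule_format, OF _ refl] that cardH by blast
    from x K KH show "inJ H (nm T K H x)"
    proof (induction rule: inJ.induct)
      case (J0 K)
      show ?case using nm_zero[OF H J0.prems(1,2)] inJ.J0 by simp
    next
      case (Jstep L' K m j)
      note K = Jstep.prems(1) and KH = Jstep.prems(2)
      have Kc: "K \<subseteq> carrier G" by (rule sg_carrier[OF K])
      define x1 where "x1 = tr T L' K m"
      have mc: "m \<in> carrier (R L')" by (rule M_carrier[OF Jstep.hyps(1,3)])
      have x1J: "inJ K x1" unfolding x1_def by (rule J_tr1[OF K Jstep.hyps(1,2,3)])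
      have x1c: "x1 \<in> carrier (R K)" by (rule J_carrier[OF x1J K])
      have jJ: "inJ K j" by (rule Jstep.hyps(4))
      have jc: "j \<in> carrier (R K)" by (rule J_carrier[OF jJ K])
      have IHj: "inJ H (nm T K H j)" by (rule Jstep.IH[OF K KH])
      have nx1: "inJ H (nm T K H x1)" unfolding x1_def by (rule J_nm_tr[OF H K Jstep.hyps(1,2) KH Jstep.hyps(3)])
      have zJ: "inJ K (if c then x1 else j)" for c using x1J jJ by simp
      have nz: "inJ H (nm T K H (if c then x1 else j))" for c using nx1 IHj by simp
      define F where "F = (\<lambda>Ob. let s = (SOME s. s \<in> Ob); M = bool_stab G H K s in
                  tr T M H
                    (finprod (R M)
                       (\<lambda>D. let h = dcrep G H M K D; K' = conjg G (inv h) M \<inter> K in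
                          nm T (M \<inter> conjg G h K) M
                            (cj T h K' (res T K' K (if s (h <# K) then x1 else j))))
                       (dcosets G H M K)))"
      have eq: "nm T K H (x1 \<oplus>\<^bsub>R K\<^esub> j) = finsum (R H) F (bool_orbits G H K)"
        unfolding F_def by (rule nm_sum_ax[OF H K KH x1c jc])
      have "inJ H (F Ob)" for Ob
      proof -
        define s where "s = (SOME s. s \<in> Ob)"
        define Ms where "Ms = bool_stab G H K s"
        have Msg: "sg Ms" unfolding Ms_def by (rule bool_stab_sg[OF H Kc])
        have MH: "Ms \<subseteq> H" unfolding Ms_def bool_stab_def by blast
        define f where "f = (\<lambda>D. let h = dcrep G H Ms K D; K' = conjg G (inv h) Ms \<inter> K in
                          nm T (Ms \<inter> conjg G h K) Ms
                            (cj T h K' (res T K' K (if s (h <# K) then x1 else j))))"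
        have "inJ H (tr T Ms H (finprod (R Ms) f (dcosets G H Ms K)))"
        proof (cases "Ms = H")
          case True
          have dc: "dcosets G H Ms K = {H}" unfolding True by (rule dcosets_self[OF H K KH])
          define h where "h = dcrep G H H K H"
          have hH: "h \<in> H" unfolding h_def by (rule dcrep_in) (use dcosets_self[OF H K KH] in simp)
          have hc: "h \<in> carrier G" using hH sg_carrier[OF H] by blast
          have ih: "inv h \<in> H" by (rule subgroup.m_inv_closed[OF H hH])
          have K'eq: "conjg G (inv h) H \<inter> K = K" using conjg_self[OF H ih] KH by blast
          have cH: "conjg G h H = H" by (rule conjg_self[OF H hH])
          have cK: "H \<inter> conjg G h K = conjg G h K" using conjg_mono[OF KH, of h] cH by blast
          define z where "z = (if s (h <# K) then x1 else j)"
          have zc: "z \<in> carrier (R K)" unfolding z_def using x1c jc by simp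
          have nzc: "nm T K H z \<in> carrier (R H)" by (rule nm_carrier[OF H K KH zc])
          have "f H = nm T (conjg G h K) H (cj T h K z)"
            unfolding f_def Let_def True h_def[symmetric] K'eq cK z_def[symmetric] using res_id[OF K zc] by simp
          also have "\<dots> = cj T h H (nm T K H z)" using cj_nm[OF hc H K KH zc] cH by simp
          also have "\<dots> = nm T K H z" by (rule cj_triv[OF H hH nzc])
          finally have fH: "f H = nm T K H z" .
          interpret RH: cring "R H" by (rule cring_lev[OF H])
          have "finprod (R H) f {H} = f H" using fH nzc by (simp add: RH.finprod_insert)
          then have "tr T Ms H (finprod (R Ms) f (dcosets G H Ms K)) = nm T K H z"
            unfolding True dcosets_self[OF H K KH] using fH tr_id[OF H nzc] by simp
          then show ?thesis unfolding z_def using nz by simp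
        next
          case False
          have cl: "card Ms < card H" using MH False finite_sg[OF H] by (meson psubsetI psubset_card_mono)
          have fin: "finite (dcosets G H Ms K)" by (rule dcosets_finite[OF sg_carrier[OF H]])
          have ne: "dcosets G H Ms K \<noteq> {}" by (rule dcosets_ne) (use subgroup.one_closed[OF H] in blast)
          have "inJ Ms (finprod (R Ms) f (dcosets G H Ms K))"
          proof (rule J_finprod[OF Msg fin ne])
            fix D assume D: "D \<in> dcosets G H Ms K"
            note dd = dc_data[OF H Msg K MH KH D]
            define h where "h = dcrep G H Ms K D"
            define K' where "K' = conjg G (inv h) Ms \<inter> K"
            define z where "z = (if s (h <# K) then x1 else j)"
            have "inJ K' (res T K' K z)" unfolding K'_def z_def h_def by (rule J_res[OF zJ K dd(2,3)])
            then have "inJ (conjg G h K') (cj T h K' (res T K' K z))"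
              unfolding h_def K'_def by (rule J_cj[OF _ dd(2) dd(1)])
            then have "inJ (Ms \<inter> conjg G h K) (cj T h K' (res T K' K z))"
              using dd(6) unfolding h_def K'_def by simp
            then have "inJ Ms (nm T (Ms \<inter> conjg G h K) Ms (cj T h K' (res T K' K z)))"
              unfolding h_def by (rule IH[OF cl Msg dd(4,5)])
            then show "inJ Ms (f D)" unfolding f_def Let_def h_def[symmetric] K'_def[symmetric] z_def[symmetric] .
          qed
          then show ?thesis by (rule J_tr[OF _ Msg H MH])
        qed
        then show ?thesis unfolding F_def Let_def s_def[symmetric] Ms_def[symmetric] by (simp only: f_def Let_def)
      qed
      then show ?case unfolding eq x1_def[symmetric] by (rule J_finsum[OF H])
    qed
  qed
qed

lemma J_nm: "sg H \<Longrightarrow> sg K \<Longrightarrow> K \<subseteq> H \<Longrightarrow> inJ K x \<Longrightarrow> inJ H (nm T K H x)"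
  using J_nm_aux by blast

end

context tamb begin

lemma TI_c1: "tambara_ideal G T I \<Longrightarrow> \<forall>H. \<not> sg H \<longrightarrow> I H = {}"
  unfolding tambara_ideal_def by (erule conjunct1)
lemma TI_c2: "tambara_ideal G T I \<Longrightarrow> \<forall>H. sg H \<longrightarrow> ideal (I H) (R H)"
  unfolding tambara_ideal_def by (erule conjunct2[THEN conjunct1])
lemma TI_c3: "tambara_ideal G T I \<Longrightarrow> \<forall>H K. sg H \<longrightarrow> sg K \<longrightarrow> K \<subseteq> H \<longrightarrow>
        (\<forall>a \<in> I H. res T K H a \<in> I K) \<and>
        (\<forall>a \<in> I K. tr T K H a \<in> I H \<and> nm T K H a \<in> I H)"
  unfolding tambara_ideal_def by (erule conjunct2[THEN conjunct2, THEN conjunct1])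
lemma TI_c4: "tambara_ideal G T I \<Longrightarrow> \<forall>g K. g \<in> carrier G \<longrightarrow> sg K \<longrightarrow> (\<forall>a \<in> I K. cj T g K a \<in> I (conjg G g K))"
  unfolding tambara_ideal_def by (erule conjunct2[THEN conjunct2, THEN conjunct2])

lemma TI_empty: "tambara_ideal G T I \<Longrightarrow> \<not> sg H \<Longrightarrow> I H = {}"
  using TI_c1 by simp
lemma TI_ideal: "tambara_ideal G T I \<Longrightarrow> sg H \<Longrightarrow> ideal (I H) (R H)"
  using TI_c2 by simp
lemma TI_res: "tambara_ideal G T I \<Longrightarrow> sg H \<Longrightarrow> sg K \<Longrightarrow> K \<subseteq> H \<Longrightarrow> x \<in> I H \<Longrightarrow> res T K H x \<in> I K"
  using TI_c3 by simp
lemma TI_tr: "tambara_ideal G T I \<Longrightarrow> sg H \<Longrightarrow> sg K \<Longrightarrow> K \<subseteq> H \<Longrightarrow> x \<in> I K \<Longrightarrow> tr T K H x \<in> I H"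
  using TI_c3 by simp
lemma TI_nm: "tambara_ideal G T I \<Longrightarrow> sg H \<Longrightarrow> sg K \<Longrightarrow> K \<subseteq> H \<Longrightarrow> x \<in> I K \<Longrightarrow> nm T K H x \<in> I H"
  using TI_c3 by simp
lemma TI_cj: "tambara_ideal G T I \<Longrightarrow> g \<in> carrier G \<Longrightarrow> sg K \<Longrightarrow> x \<in> I K \<Longrightarrow> cj T g K x \<in> I (conjg G g K)"
  using TI_c4 by simp

lemma TI_intro:
  assumes "\<And>H. \<not> sg H \<Longrightarrow> I H = {}"
    and "\<And>H. sg H \<Longrightarrow> ideal (I H) (R H)"
    and "\<And>H K x. sg H \<Longrightarrow> sg K \<Longrightarrow> K \<subseteq> H \<Longrightarrow> x \<in> I H \<Longrightarrow> res T K H x \<in> I K"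
    and "\<And>H K x. sg H \<Longrightarrow> sg K \<Longrightarrow> K \<subseteq> H \<Longrightarrow> x \<in> I K \<Longrightarrow> tr T K H x \<in> I H"
    and "\<And>H K x. sg H \<Longrightarrow> sg K \<Longrightarrow> K \<subseteq> H \<Longrightarrow> x \<in> I K \<Longrightarrow> nm T K H x \<in> I H"
    and "\<And>g K x. g \<in> carrier G \<Longrightarrow> sg K \<Longrightarrow> x \<in> I K \<Longrightarrow> cj T g K x \<in> I (conjg G g K)"
  shows "tambara_ideal G T I"
  unfolding tambara_ideal_def using assms by (intro conjI allI impI ballI) simp_all

lemma TI_carrier: "tambara_ideal G T I \<Longrightarrow> sg H \<Longrightarrow> x \<in> I H \<Longrightarrow> x \<in> carrier (R H)"
  by (rule ideal.Icarr[OF TI_ideal])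

lemma TI_sg: "tambara_ideal G T I \<Longrightarrow> x \<in> I H \<Longrightarrow> sg H"
  by (rule ccontr) (simp add: TI_empty)

lemma TI_inter: assumes ne: "Fam \<noteq> {}" and all: "\<And>I. I \<in> Fam \<Longrightarrow> tambara_ideal G T I"
  shows "tambara_ideal G T (\<lambda>L. \<Inter> {I L | I. I \<in> Fam})"
proof (rule TI_intro)
  fix H assume H: "\<not> sg H"
  obtain I0 where I0: "I0 \<in> Fam" using ne by blast
  have "I0 H = {}" by (rule TI_empty[OF all[OF I0] H])
  then show "\<Inter> {I H | I. I \<in> Fam} = {}" using I0 by blast
next
  fix H assume H: "sg H"
  have e: "\<Inter> {I H | I. I \<in> Fam} = \<Inter> ((\<lambda>I. I H) ` Fam)" by blast
  have "ideal (\<Inter> ((\<lambda>I. I H) ` Fam)) (R H)"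
  proof (rule ring.i_Intersect[OF cring.axioms(1)[OF cring_lev[OF H]]])
    show "\<And>J. J \<in> (\<lambda>I. I H) ` Fam \<Longrightarrow> ideal J (R H)" using TI_ideal[OF all H] by blast
    show "(\<lambda>I. I H) ` Fam \<noteq> {}" using ne by blast
  qed
  then show "ideal (\<Inter> {I H | I. I \<in> Fam}) (R H)" unfolding e .
next
  fix H K x assume a: "sg H" "sg K" "K \<subseteq> H" and x: "x \<in> \<Inter> {I H | I. I \<in> Fam}"
  have "res T K H x \<in> I K" if I: "I \<in> Fam" for I
  proof -
    have "x \<in> I H" using x I by blast
    then show ?thesis by (rule TI_res[OF all[OF I] a])
  qed
  then show "res T K H x \<in> \<Inter> {I K | I. I \<in> Fam}" by blast
next
  fix H K x assume a: "sg H" "sg K" "K \<subseteq> H" and x: "x \<in> \<Inter> {I K | I. I \<in> Fam}"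
  have "tr T K H x \<in> I H" if I: "I \<in> Fam" for I
  proof -
    have "x \<in> I K" using x I by blast
    then show ?thesis by (rule TI_tr[OF all[OF I] a])
  qed
  then show "tr T K H x \<in> \<Inter> {I H | I. I \<in> Fam}" by blast
next
  fix H K x assume a: "sg H" "sg K" "K \<subseteq> H" and x: "x \<in> \<Inter> {I K | I. I \<in> Fam}"
  have "nm T K H x \<in> I H" if I: "I \<in> Fam" for I
  proof -
    have "x \<in> I K" using x I by blast
    then show ?thesis by (rule TI_nm[OF all[OF I] a])
  qed
  then show "nm T K H x \<in> \<Inter> {I H | I. I \<in> Fam}" by blast
next
  fix g K x assume a: "g \<in> carrier G" "sg K" and x: "x \<in> \<Inter> {I K | I. I \<in> Fam}"
  have "cj T g K x \<in> I (conjg G g K)" if I: "I \<in> Fam" for I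
  proof -
    have "x \<in> I K" using x I by blast
    then show ?thesis by (rule TI_cj[OF all[OF I] a])
  qed
  then show "cj T g K x \<in> \<Inter> {I (conjg G g K) | I. I \<in> Fam}" by blast
qed

definition Top where "Top L = (if sg L then carrier (R L) else {})"

lemma Top_ideal: "tambara_ideal G T Top"
proof (rule TI_intro)
  show "\<And>H. \<not> sg H \<Longrightarrow> Top H = {}" unfolding Top_def by simp
  show "ideal (Top H) (R H)" if H: "sg H" for H
    unfolding Top_def using ring.oneideal[OF cring.axioms(1)[OF cring_lev[OF H]]] H by simp
  show "\<And>H K x. sg H \<Longrightarrow> sg K \<Longrightarrow> K \<subseteq> H \<Longrightarrow> x \<in> Top H \<Longrightarrow> res T K H x \<in> Top K"
    unfolding Top_def using res_carrier by simp
  show "\<And>H K x. sg H \<Longrightarrow> sg K \<Longrightarrow> K \<subseteq> H \<Longrightarrow> x \<in> Top K \<Longrightarrow> tr T K H x \<in> Top H"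
    unfolding Top_def using tr_carrier by simp
  show "\<And>H K x. sg H \<Longrightarrow> sg K \<Longrightarrow> K \<subseteq> H \<Longrightarrow> x \<in> Top K \<Longrightarrow> nm T K H x \<in> Top H"
    unfolding Top_def using nm_carrier by simp
  show "\<And>g K x. g \<in> carrier G \<Longrightarrow> sg K \<Longrightarrow> x \<in> Top K \<Longrightarrow> cj T g K x \<in> Top (conjg G g K)"
    unfolding Top_def using cj_carrier conjg_subgroup by simp
qed

lemma gen_eq: assumes S: "\<And>K. S K \<subseteq> Top K"
  shows "tambara_gen G T S = (\<lambda>L. \<Inter> {I L | I. I \<in> {I. tambara_ideal G T I \<and> (\<forall>K. S K \<subseteq> I K)}})"
proof
  fix L
  have Tin: "Top \<in> {I. tambara_ideal G T I \<and> (\<forall>K. S K \<subseteq> I K)}" using Top_ideal S by blast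
  show "tambara_gen G T S L = \<Inter> {I L | I. I \<in> {I. tambara_ideal G T I \<and> (\<forall>K. S K \<subseteq> I K)}}"
  proof (cases "sg L")
    case True then show ?thesis unfolding tambara_gen_def by simp
  next
    case False
    then have "Top L = {}" unfolding Top_def by simp
    have "\<Inter> {I L | I. I \<in> {I. tambara_ideal G T I \<and> (\<forall>K. S K \<subseteq> I K)}} \<subseteq> Top L"
      using Tin by blast
    then show ?thesis unfolding tambara_gen_def using False \<open>Top L = {}\<close> by simp
  qed
qed

lemma gen_ideal: assumes S: "\<And>K. S K \<subseteq> Top K" shows "tambara_ideal G T (tambara_gen G T S)"
  unfolding gen_eq[OF S] by (rule TI_inter) (use Top_ideal S in blast)+

lemma gen_min: assumes I: "tambara_ideal G T I" and S: "\<And>K. S K \<subseteq> I K"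
  shows "tambara_sub (tambara_gen G T S) I"
  unfolding tambara_sub_def
proof
  fix H
  have "I \<in> {I. tambara_ideal G T I \<and> (\<forall>K. S K \<subseteq> I K)}" using I S by blast
  then have "\<Inter> {J H | J. tambara_ideal G T J \<and> (\<forall>K. S K \<subseteq> J K)} \<subseteq> I H" by blast
  then show "tambara_gen G T S H \<subseteq> I H" unfolding tambara_gen_def by simp
qed

lemma gen_incl: "sg L \<Longrightarrow> S L \<subseteq> tambara_gen G T S L"
  unfolding tambara_gen_def by auto

lemma prod_incl: "sg L \<Longrightarrow> ideal_prod (R L) (I L) (J L) \<subseteq> tambara_prod G T I J L"
  unfolding tambara_prod_def using gen_incl[of L "\<lambda>H. if sg H then ideal_prod (R H) (I H) (J H) else {}"] by simp

end

context tgen begin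

definition Jf where "Jf L = (if sg L then Jset L else {})"

lemma Jf_ideal: "tambara_ideal G T Jf"
proof (rule TI_intro)
  show "\<And>H. \<not> sg H \<Longrightarrow> Jf H = {}" unfolding Jf_def by simp
  show "\<And>H. sg H \<Longrightarrow> ideal (Jf H) (R H)" unfolding Jf_def using J_ideal by simp
  show "\<And>H K x. sg H \<Longrightarrow> sg K \<Longrightarrow> K \<subseteq> H \<Longrightarrow> x \<in> Jf H \<Longrightarrow> res T K H x \<in> Jf K"
    unfolding Jf_def Jset_def using J_res by simp
  show "\<And>H K x. sg H \<Longrightarrow> sg K \<Longrightarrow> K \<subseteq> H \<Longrightarrow> x \<in> Jf K \<Longrightarrow> tr T K H x \<in> Jf H"
    unfolding Jf_def Jset_def using J_tr by simp
  show "\<And>H K x. sg H \<Longrightarrow> sg K \<Longrightarrow> K \<subseteq> H \<Longrightarrow> x \<in> Jf K \<Longrightarrow> nm T K H x \<in> Jf H"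
    unfolding Jf_def Jset_def using J_nm by simp
  show "\<And>g K x. g \<in> carrier G \<Longrightarrow> sg K \<Longrightarrow> x \<in> Jf K \<Longrightarrow> cj T g K x \<in> Jf (conjg G g K)"
    unfolding Jf_def Jset_def using J_cj conjg_subgroup by simp
qed

lemma a_Jf: "a \<in> Jf H0"
  unfolding Jf_def Jset_def using H0 J_M[OF H0 B_sub_M[OF H0 a_in_B]] by simp

lemma B_sub_ideal: assumes I: "tambara_ideal G T I" and aI: "a \<in> I H0" and L: "sg L" and u: "u \<in> B L"
  shows "u \<in> I L"
proof -
  obtain L' g H' where *: "sg L'" "L' \<subseteq> L" "sg H'" "H' \<subseteq> H0" "g \<in> carrier G" "conjg G g H' = L'"
     "u = nm T L' L (cj T g H' (res T H' H0 a))" using u by (rule B_elim)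
  have "res T H' H0 a \<in> I H'" by (rule TI_res[OF I H0 *(3,4) aI])
  then have "cj T g H' (res T H' H0 a) \<in> I L'" using TI_cj[OF I *(5,3)] *(6) by metis
  then show ?thesis unfolding *(7) by (rule TI_nm[OF I L *(1,2)])
qed

end

context tamb begin

lemma prime_ideal: "tambara_prime G T P \<Longrightarrow> tambara_ideal G T P"
  unfolding tambara_prime_def by (erule conjunct1)
lemma prime_one: "tambara_prime G T P \<Longrightarrow> \<one>\<^bsub>R (carrier G)\<^esub> \<notin> P (carrier G)"
  unfolding tambara_prime_def by (erule conjunct2[THEN conjunct1])
lemma prime_prime: "tambara_prime G T P \<Longrightarrow> tambara_ideal G T I \<Longrightarrow> tambara_ideal G T J \<Longrightarrow>
   tambara_sub (tambara_prod G T I J) P \<Longrightarrow> tambara_sub I P \<or> tambara_sub J P"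
  unfolding tambara_prime_def by blast

lemma ideal_add: "ideal I S \<Longrightarrow> x \<in> I \<Longrightarrow> y \<in> I \<Longrightarrow> x \<oplus>\<^bsub>S\<^esub> y \<in> I"
  by (rule additive_subgroup.a_closed[OF ideal.axioms(1)])

lemma key:
  assumes H0: "sg H0" and a: "a \<in> carrier (R H0)" and K0: "sg K0" and b: "b \<in> carrier (R K0)"
  shows "\<exists>F. finite F \<and> (\<forall>p\<in>F. sg (fst p) \<and> snd p \<in> carrier (R (fst p))) \<and>
     (\<forall>I1 I2. tambara_ideal G T I1 \<longrightarrow> tambara_ideal G T I2 \<longrightarrow> a \<in> I1 H0 \<longrightarrow> b \<in> I2 K0 \<longrightarrow>
        (\<forall>p\<in>F. snd p \<in> tambara_prod G T I1 I2 (fst p))) \<and>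
     (\<forall>P. tambara_prime G T P \<longrightarrow> (\<forall>p\<in>F. snd p \<in> P (fst p)) \<longrightarrow> a \<in> P H0 \<or> b \<in> P K0)"
proof -
  interpret A: tgen G T H0 a by (rule tgen.intro[OF tamb_axioms]) (rule tgen_axioms.intro[OF H0 a])
  interpret Bb: tgen G T K0 b by (rule tgen.intro[OF tamb_axioms]) (rule tgen_axioms.intro[OF K0 b])
  define F where "F = {(L, u \<otimes>\<^bsub>R L\<^esub> v) | L u v. sg L \<and> u \<in> A.B L \<and> v \<in> Bb.B L}"
  have Fsub: "F \<subseteq> (\<lambda>(L, u, v). (L, u \<otimes>\<^bsub>R L\<^esub> v)) ` (SIGMA L:{L. sg L}. A.B L \<times> Bb.B L)"
    unfolding F_def by force
  have "finite {L. sg L}"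
  proof (rule finite_subset)
    show "{L. sg L} \<subseteq> Pow (carrier G)" using sg_carrier by blast
    show "finite (Pow (carrier G))" using finG by simp
  qed
  then have "finite (SIGMA L:{L. sg L}. A.B L \<times> Bb.B L)"
    using A.B_finite Bb.B_finite by (intro finite_SigmaI) auto
  then have finF: "finite F" using Fsub finite_subset by blast
  have Fc: "\<forall>p\<in>F. sg (fst p) \<and> snd p \<in> carrier (R (fst p))"
  proof
    fix p assume "p \<in> F"
    then obtain L u v where *: "p = (L, u \<otimes>\<^bsub>R L\<^esub> v)" "sg L" "u \<in> A.B L" "v \<in> Bb.B L"
      unfolding F_def by blast
    interpret RL: cring "R L" by (rule cring_lev[OF *(2)])
    show "sg (fst p) \<and> snd p \<in> carrier (R (fst p))"
      using *(1,2) A.B_carrier[OF *(2,3)] Bb.B_carrier[OF *(2,4)] by simp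
  qed
  have Fi: "\<forall>I1 I2. tambara_ideal G T I1 \<longrightarrow> tambara_ideal G T I2 \<longrightarrow> a \<in> I1 H0 \<longrightarrow> b \<in> I2 K0 \<longrightarrow>
        (\<forall>p\<in>F. snd p \<in> tambara_prod G T I1 I2 (fst p))"
  proof (intro allI impI ballI)
    fix I1 I2 p assume I1: "tambara_ideal G T I1" and I2: "tambara_ideal G T I2"
      and aI: "a \<in> I1 H0" and bI: "b \<in> I2 K0" and p: "p \<in> F"
    then obtain L u v where *: "p = (L, u \<otimes>\<^bsub>R L\<^esub> v)" "sg L" "u \<in> A.B L" "v \<in> Bb.B L"
      unfolding F_def by blast
    have "u \<otimes>\<^bsub>R L\<^esub> v \<in> ideal_prod (R L) (I1 L) (I2 L)"
      by (rule ideal_prod.prod[OF A.B_sub_ideal[OF I1 aI *(2,3)] Bb.B_sub_ideal[OF I2 bI *(2,4)]])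
    then show "snd p \<in> tambara_prod G T I1 I2 (fst p)" using prod_incl[OF *(2)] *(1) by auto
  qed
  have Fp: "\<forall>P. tambara_prime G T P \<longrightarrow> (\<forall>p\<in>F. snd p \<in> P (fst p)) \<longrightarrow> a \<in> P H0 \<or> b \<in> P K0"
  proof (intro allI impI)
    fix P assume P: "tambara_prime G T P" and FP: "\<forall>p\<in>F. snd p \<in> P (fst p)"
    have PI: "tambara_ideal G T P" by (rule prime_ideal[OF P])
    define SF where "SF L = {w. (L, w) \<in> F}" for L
    have SFT: "SF L \<subseteq> Top L" for L
      unfolding SF_def Top_def using Fc by auto
    define Q where "Q = tambara_gen G T SF"
    have QI: "tambara_ideal G T Q" unfolding Q_def by (rule gen_ideal[OF SFT])
    have QP: "tambara_sub Q P" unfolding Q_def by (rule gen_min[OF PI]) (use FP SF_def in auto)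
    have lemA: "m \<otimes>\<^bsub>R L\<^esub> n \<in> Q L" if L: "sg L" and m: "m \<in> A.M L" and n: "n \<in> Bb.M L" for L m n
    proof -
      interpret RL: cring "R L" by (rule cring_lev[OF L])
      obtain r u where ru: "r \<in> carrier (R L)" "u \<in> A.B L" "m = r \<otimes>\<^bsub>R L\<^esub> u" using m by (rule A.M_elim)
      obtain r' v where rv: "r' \<in> carrier (R L)" "v \<in> Bb.B L" "n = r' \<otimes>\<^bsub>R L\<^esub> v" using n by (rule Bb.M_elim)
      have uc: "u \<in> carrier (R L)" by (rule A.B_carrier[OF L ru(2)])
      have vc: "v \<in> carrier (R L)" by (rule Bb.B_carrier[OF L rv(2)])
      have e: "m \<otimes>\<^bsub>R L\<^esub> n = (r \<otimes>\<^bsub>R L\<^esub> r') \<otimes>\<^bsub>R L\<^esub> (u \<otimes>\<^bsub>R L\<^esub> v)"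
        unfolding ru(3) rv(3) using ru(1) rv(1) uc vc by (simp add: RL.m_ac)
      have "(L, u \<otimes>\<^bsub>R L\<^esub> v) \<in> F" unfolding F_def using L ru(2) rv(2) by blast
      then have "u \<otimes>\<^bsub>R L\<^esub> v \<in> Q L" using gen_incl[OF L, of SF] unfolding Q_def SF_def by blast
      then show ?thesis unfolding e by (rule ideal.I_l_closed[OF TI_ideal[OF QI L]]) (use ru(1) rv(1) in simp)
    qed
    have lemB: "Bb.inJ L j \<Longrightarrow> sg L \<Longrightarrow> m \<in> A.M L \<Longrightarrow> m \<otimes>\<^bsub>R L\<^esub> j \<in> Q L" for L j m
    proof (induction arbitrary: m rule: Bb.inJ.induct)
      case (J0 L)
      interpret RL: cring "R L" by (rule cring_lev[OF J0.prems(1)])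
      have "m \<otimes>\<^bsub>R L\<^esub> \<zero>\<^bsub>R L\<^esub> = \<zero>\<^bsub>R L\<^esub>" using A.M_carrier[OF J0.prems] by simp
      then show ?case using ideal.Icarr TI_ideal[OF QI J0.prems(1)] additive_subgroup.zero_closed[OF ideal.axioms(1)[OF TI_ideal[OF QI J0.prems(1)]]] by simp
    next
      case (Jstep L' L n j)
      note L = Jstep.prems(1)
      interpret RL: cring "R L" by (rule cring_lev[OF L])
      have nc: "n \<in> carrier (R L')" by (rule Bb.M_carrier[OF Jstep.hyps(1,3)])
      have t: "tr T L' L n \<in> carrier (R L)" by (rule tr_carrier[OF L Jstep.hyps(1,2) nc])
      have jc: "j \<in> carrier (R L)" by (rule Bb.J_carrier[OF Jstep.hyps(4) L])
      have mc: "m \<in> carrier (R L)" by (rule A.M_carrier[OF L Jstep.prems(2)])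
      have "m \<otimes>\<^bsub>R L\<^esub> (tr T L' L n \<oplus>\<^bsub>R L\<^esub> j) = tr T L' L n \<otimes>\<^bsub>R L\<^esub> m \<oplus>\<^bsub>R L\<^esub> m \<otimes>\<^bsub>R L\<^esub> j"
        using t jc mc by (simp add: RL.r_distr RL.m_comm)
      also have "tr T L' L n \<otimes>\<^bsub>R L\<^esub> m = tr T L' L (n \<otimes>\<^bsub>R L'\<^esub> res T L' L m)"
        by (rule frob[OF L Jstep.hyps(1,2) nc mc])
      finally have e: "m \<otimes>\<^bsub>R L\<^esub> (tr T L' L n \<oplus>\<^bsub>R L\<^esub> j) =
         tr T L' L (n \<otimes>\<^bsub>R L'\<^esub> res T L' L m) \<oplus>\<^bsub>R L\<^esub> m \<otimes>\<^bsub>R L\<^esub> j" .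
      have rm: "res T L' L m \<in> A.M L'" by (rule A.M_res[OF L Jstep.hyps(1,2) Jstep.prems(2)])
      interpret RL': cring "R L'" by (rule cring_lev[OF Jstep.hyps(1)])
      have "n \<otimes>\<^bsub>R L'\<^esub> res T L' L m = res T L' L m \<otimes>\<^bsub>R L'\<^esub> n"
        using nc A.M_carrier[OF Jstep.hyps(1) rm] by (simp add: RL'.m_comm)
      also have "\<dots> \<in> Q L'" by (rule lemA[OF Jstep.hyps(1) rm Jstep.hyps(3)])
      finally have "tr T L' L (n \<otimes>\<^bsub>R L'\<^esub> res T L' L m) \<in> Q L" by (rule TI_tr[OF QI L Jstep.hyps(1,2)])
      then show ?case unfolding e
        by (rule ideal_add[OF TI_ideal[OF QI L]]) (rule Jstep.IH[OF Jstep.prems])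
    qed
    have lemC: "A.inJ L i \<Longrightarrow> sg L \<Longrightarrow> Bb.inJ L j \<Longrightarrow> i \<otimes>\<^bsub>R L\<^esub> j \<in> Q L" for L i j
    proof (induction arbitrary: j rule: A.inJ.induct)
      case (J0 L)
      interpret RL: cring "R L" by (rule cring_lev[OF J0.prems(1)])
      have "\<zero>\<^bsub>R L\<^esub> \<otimes>\<^bsub>R L\<^esub> j = \<zero>\<^bsub>R L\<^esub>" using Bb.J_carrier[OF J0.prems(2,1)] by simp
      then show ?case using additive_subgroup.zero_closed[OF ideal.axioms(1)[OF TI_ideal[OF QI J0.prems(1)]]] by simp
    next
      case (Jstep L' L m i)
      note L = Jstep.prems(1)
      interpret RL: cring "R L" by (rule cring_lev[OF L])
      have mc: "m \<in> carrier (R L')" by (rule A.M_carrier[OF Jstep.hyps(1,3)])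
      have t: "tr T L' L m \<in> carrier (R L)" by (rule tr_carrier[OF L Jstep.hyps(1,2) mc])
      have ic: "i \<in> carrier (R L)" by (rule A.J_carrier[OF Jstep.hyps(4) L])
      have jc: "j \<in> carrier (R L)" by (rule Bb.J_carrier[OF Jstep.prems(2) L])
      have "(tr T L' L m \<oplus>\<^bsub>R L\<^esub> i) \<otimes>\<^bsub>R L\<^esub> j = tr T L' L m \<otimes>\<^bsub>R L\<^esub> j \<oplus>\<^bsub>R L\<^esub> i \<otimes>\<^bsub>R L\<^esub> j"
        using t ic jc by (simp add: RL.l_distr)
      also have "tr T L' L m \<otimes>\<^bsub>R L\<^esub> j = tr T L' L (m \<otimes>\<^bsub>R L'\<^esub> res T L' L j)"
        by (rule frob[OF L Jstep.hyps(1,2) mc jc])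
      finally have e: "(tr T L' L m \<oplus>\<^bsub>R L\<^esub> i) \<otimes>\<^bsub>R L\<^esub> j =
         tr T L' L (m \<otimes>\<^bsub>R L'\<^esub> res T L' L j) \<oplus>\<^bsub>R L\<^esub> i \<otimes>\<^bsub>R L\<^esub> j" .
      have rj: "Bb.inJ L' (res T L' L j)" by (rule Bb.J_res[OF Jstep.prems(2) L Jstep.hyps(1,2)])
      have "m \<otimes>\<^bsub>R L'\<^esub> res T L' L j \<in> Q L'" by (rule lemB[OF rj Jstep.hyps(1,3)])
      then have "tr T L' L (m \<otimes>\<^bsub>R L'\<^esub> res T L' L j) \<in> Q L" by (rule TI_tr[OF QI L Jstep.hyps(1,2)])
      then show ?case unfolding e
        by (rule ideal_add[OF TI_ideal[OF QI L]]) (rule Jstep.IH[OF Jstep.prems])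
    qed
    have PQ: "tambara_sub (tambara_prod G T A.Jf Bb.Jf) Q"
      unfolding tambara_prod_def
    proof (rule gen_min[OF QI])
      fix K
      show "(if sg K then ideal_prod (R K) (A.Jf K) (Bb.Jf K) else {}) \<subseteq> Q K"
      proof (cases "sg K")
        case False then show ?thesis by simp
      next
        case True
        have "x \<in> Q K" if "x \<in> ideal_prod (R K) (A.Jf K) (Bb.Jf K)" for x
          using that
        proof (induction rule: ideal_prod.induct)
          case (prod i j)
          then show ?case using lemC[of K i j] True unfolding A.Jf_def Bb.Jf_def A.Jset_def Bb.Jset_def by simp
        next
          case (sum s1 s2)
          show ?case by (rule ideal_add[OF TI_ideal[OF QI True] sum.IH])
        qed
        then show ?thesis using True by auto
      qed
    qed
    have "tambara_sub (tambara_prod G T A.Jf Bb.Jf) P"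
      using PQ QP unfolding tambara_sub_def by blast
    then have "tambara_sub A.Jf P \<or> tambara_sub Bb.Jf P"
      by (rule prime_prime[OF P A.Jf_ideal Bb.Jf_ideal])
    then show "a \<in> P H0 \<or> b \<in> P K0"
      using A.a_Jf Bb.a_Jf unfolding tambara_sub_def by blast
  qed
  show ?thesis using finF Fc Fi Fp by blast
qed

end

context tamb begin

definition Bo where "Bo E = {P \<in> nak_spec G T. \<forall>p\<in>E. snd p \<notin> P (fst p)}"

definition realizable where
  "realizable E S \<longleftrightarrow> (\<forall>\<Phi>. finite \<Phi> \<longrightarrow> \<Phi> \<subseteq> S \<longrightarrow> (\<exists>P\<in>Bo E. \<forall>p\<in>\<Phi>. snd p \<in> P (fst p)))"

lemma Bo_prime: "P \<in> Bo E \<Longrightarrow> tambara_prime G T P"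
  unfolding Bo_def nak_spec_def by blast

lemma Bo_ideal: "P \<in> Bo E \<Longrightarrow> tambara_ideal G T P"
  by (rule prime_ideal[OF Bo_prime])

lemma max_closed:
  assumes max: "\<And>S'. X \<subseteq> S' \<Longrightarrow> realizable E S' \<Longrightarrow> S \<subseteq> S' \<Longrightarrow> S' = S"
    and re: "realizable E S" and XS: "X \<subseteq> S" and Psi: "finite \<Psi>" "\<Psi> \<subseteq> S"
    and imp: "\<And>P. P \<in> Bo E \<Longrightarrow> \<forall>p\<in>\<Psi>. snd p \<in> P (fst p) \<Longrightarrow> snd q \<in> P (fst q)"
  shows "q \<in> S"
proof -
  have "realizable E (insert q S)" unfolding realizable_def
  proof (intro allI impI)
    fix \<Phi> assume fin: "finite \<Phi>" and sub: "\<Phi> \<subseteq> insert q S"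
    have f1: "finite ((\<Phi> - {q}) \<union> \<Psi>)" using fin Psi(1) by blast
    have f2: "(\<Phi> - {q}) \<union> \<Psi> \<subseteq> S" using Psi(2) sub by blast
    obtain P where P: "P \<in> Bo E" "\<forall>p\<in>(\<Phi> - {q}) \<union> \<Psi>. snd p \<in> P (fst p)"
      using re[unfolded realizable_def, rule_format, OF f1 f2] by blast
    have "\<forall>p\<in>\<Psi>. snd p \<in> P (fst p)" using P(2) by blast
    then have qP: "snd q \<in> P (fst q)" by (rule imp[OF P(1)])
    have "\<forall>p\<in>\<Phi>. snd p \<in> P (fst p)"
    proof
      fix p assume p: "p \<in> \<Phi>"
      show "snd p \<in> P (fst p)"
      proof (cases "p = q")
        case True then show ?thesis using qP by simp
      next
        case False then have "p \<in> (\<Phi> - {q}) \<union> \<Psi>" using p by blast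
        then show ?thesis using P(2) by blast
      qed
    qed
    then show "\<exists>P\<in>Bo E. \<forall>p\<in>\<Phi>. snd p \<in> P (fst p)" using P(1) by blast
  qed
  moreover have "X \<subseteq> insert q S" using XS by blast
  ultimately have "insert q S = S" using max subset_insertI by blast
  then show ?thesis by blast
qed

lemma real_single: assumes "realizable E S" "p \<in> S" shows "\<exists>P\<in>Bo E. snd p \<in> P (fst p)"
proof -
  have "finite {p}" "{p} \<subseteq> S" using assms(2) by auto
  then have "\<exists>P\<in>Bo E. \<forall>q\<in>{p}. snd q \<in> P (fst q)" using assms(1) unfolding realizable_def by blast
  then show ?thesis by simp
qed

lemma cover:
  assumes hyp: "\<forall>P\<in>Bo E. \<exists>p\<in>X. snd p \<notin> P (fst p)"
  shows "\<exists>X'. finite X' \<and> X' \<subseteq> X \<and> (\<forall>P\<in>Bo E. \<exists>p\<in>X'. snd p \<notin> P (fst p))"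
proof (rule ccontr)
  assume nc: "\<not> ?thesis"
  have reX: "realizable E X" unfolding realizable_def
  proof (intro allI impI)
    fix \<Phi> assume a: "finite \<Phi>" "\<Phi> \<subseteq> X"
    show "\<exists>P\<in>Bo E. \<forall>p\<in>\<Phi>. snd p \<in> P (fst p)"
    proof (rule ccontr)
      assume "\<not> (\<exists>P\<in>Bo E. \<forall>p\<in>\<Phi>. snd p \<in> P (fst p))"
      then have "\<forall>P\<in>Bo E. \<exists>p\<in>\<Phi>. snd p \<notin> P (fst p)" by blast
      then show False using nc a by blast
    qed
  qed
  define \<A> where "\<A> = {S. X \<subseteq> S \<and> realizable E S}"
  have "\<exists>M\<in>\<A>. \<forall>Y\<in>\<A>. M \<subseteq> Y \<longrightarrow> Y = M"
  proof (rule Zorn_Lemma2, rule ballI)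
    fix C assume C: "C \<in> chains \<A>"
    have CA: "C \<subseteq> \<A>" by (rule chainsD2[OF C])
    have "X \<union> \<Union>C \<in> \<A>" unfolding \<A>_def
    proof (intro CollectI conjI)
      show "X \<subseteq> X \<union> \<Union>C" by blast
      show "realizable E (X \<union> \<Union>C)" unfolding realizable_def
      proof (intro allI impI)
        fix \<Phi> assume fin: "finite \<Phi>" and sub: "\<Phi> \<subseteq> X \<union> \<Union>C"
        show "\<exists>P\<in>Bo E. \<forall>p\<in>\<Phi>. snd p \<in> P (fst p)"
        proof (cases "C = {}")
          case True
          then have "\<Phi> \<subseteq> X" using sub by blast
          then show ?thesis using reX[unfolded realizable_def, rule_format, OF fin] by blast
        next
          case False
          have "X \<subseteq> \<Union>C"
          proof -
            obtain C0 where C0: "C0 \<in> C" using False by blast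
            then have "X \<subseteq> C0" using CA unfolding \<A>_def by blast
            then show ?thesis using C0 by blast
          qed
          then have "X \<union> \<Union>C = \<Union>C" by blast
          then have sub2: "\<Phi> \<subseteq> \<Union>C" using sub by simp
          have ch: "subset.chain \<A> C" using C unfolding chains_alt_def by blast
          obtain B where B: "B \<in> C" "\<Phi> \<subseteq> B" by (rule finite_subset_Union_chain[OF fin sub2 False ch])
          have "realizable E B" using B(1) CA unfolding \<A>_def by blast
          then show ?thesis using fin B(2) unfolding realizable_def by simp
        qed
      qed
    qed
    moreover have "\<forall>Y\<in>C. Y \<subseteq> X \<union> \<Union>C" by blast
    ultimately show "\<exists>U\<in>\<A>. \<forall>Y\<in>C. Y \<subseteq> U" by (rule bexI[rotated])
  qed
  then obtain S where SA: "S \<in> \<A>" and Smax: "\<forall>Y\<in>\<A>. S \<subseteq> Y \<longrightarrow> Y = S" by (elim bexE)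
  have XS: "X \<subseteq> S" and reS: "realizable E S" using SA unfolding \<A>_def by auto
  have max: "\<And>S'. X \<subseteq> S' \<Longrightarrow> realizable E S' \<Longrightarrow> S \<subseteq> S' \<Longrightarrow> S' = S"
    using Smax unfolding \<A>_def by simp
  define Q where "Q L = {x. (L, x) \<in> S}" for L
  have memS: "(L, x) \<in> S \<Longrightarrow> sg L \<and> x \<in> carrier (R L)" for L x
  proof -
    assume "(L, x) \<in> S"
    then obtain P where P: "P \<in> Bo E" "x \<in> P L" using real_single[OF reS] by fastforce
    have s: "sg L" by (rule TI_sg[OF Bo_ideal[OF P(1)] P(2)])
    then show ?thesis using TI_carrier[OF Bo_ideal[OF P(1)] s P(2)] by blast
  qed
  have clo: "(L, y) \<in> S" if Psi: "finite \<Psi>" "\<Psi> \<subseteq> S"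
     and imp: "\<And>P. tambara_ideal G T P \<Longrightarrow> \<forall>p\<in>\<Psi>. snd p \<in> P (fst p) \<Longrightarrow> y \<in> P L" for \<Psi> L y
    by (rule max_closed[OF max reS XS Psi]) (use imp Bo_ideal in auto)
  have QI: "tambara_ideal G T Q"
  proof (rule TI_intro)
    fix H assume "\<not> sg H" then show "Q H = {}" unfolding Q_def using memS by blast
  next
    fix H assume H: "sg H"
    show "ideal (Q H) (R H)"
    proof (rule ideal_intro_cring[OF cring_lev[OF H]])
      show "Q H \<subseteq> carrier (R H)" unfolding Q_def using memS by blast
      have "(H, \<zero>\<^bsub>R H\<^esub>) \<in> S"
      proof (rule clo[of "{}"])
        fix P assume P: "tambara_ideal G T P"
        show "\<zero>\<^bsub>R H\<^esub> \<in> P H" by (rule additive_subgroup.zero_closed[OF ideal.axioms(1)[OF TI_ideal[OF P H]]])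
      qed auto
      then show "\<zero>\<^bsub>R H\<^esub> \<in> Q H" unfolding Q_def by simp
      show "a \<oplus>\<^bsub>R H\<^esub> b \<in> Q H" if ab: "a \<in> Q H" "b \<in> Q H" for a b
      proof -
        have "(H, a \<oplus>\<^bsub>R H\<^esub> b) \<in> S"
        proof (rule clo[of "{(H, a), (H, b)}"])
          show "finite {(H, a), (H, b)}" by simp
          show "{(H, a), (H, b)} \<subseteq> S" using ab unfolding Q_def by simp
          fix P assume P: "tambara_ideal G T P" and m: "\<forall>p\<in>{(H, a), (H, b)}. snd p \<in> P (fst p)"
          have "a \<in> P H" "b \<in> P H" using m by auto
          then show "a \<oplus>\<^bsub>R H\<^esub> b \<in> P H" by (rule ideal_add[OF TI_ideal[OF P H]])
        qed
        then show ?thesis unfolding Q_def by simp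
      qed
      show "x \<otimes>\<^bsub>R H\<^esub> a \<in> Q H" if ax: "a \<in> Q H" "x \<in> carrier (R H)" for a x
      proof -
        have "(H, x \<otimes>\<^bsub>R H\<^esub> a) \<in> S"
        proof (rule clo[of "{(H, a)}"])
          show "finite {(H, a)}" by simp
          show "{(H, a)} \<subseteq> S" using ax unfolding Q_def by simp
          fix P assume P: "tambara_ideal G T P" and m: "\<forall>p\<in>{(H, a)}. snd p \<in> P (fst p)"
          have "a \<in> P H" using m by auto
          then show "x \<otimes>\<^bsub>R H\<^esub> a \<in> P H" by (rule ideal.I_l_closed[OF TI_ideal[OF P H] _ ax(2)])
        qed
        then show ?thesis unfolding Q_def by simp
      qed
    qed
  next
    fix H K x assume a: "sg H" "sg K" "K \<subseteq> H" "x \<in> Q H"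
    have "(K, res T K H x) \<in> S"
    proof (rule clo[of "{(H, x)}"])
      show "finite {(H, x)}" by simp
      show "{(H, x)} \<subseteq> S" using a unfolding Q_def by simp
      fix P assume P: "tambara_ideal G T P" and m: "\<forall>p\<in>{(H, x)}. snd p \<in> P (fst p)"
      have "x \<in> P H" using m by auto
      then show "res T K H x \<in> P K" by (rule TI_res[OF P a(1-3)])
    qed
    then show "res T K H x \<in> Q K" unfolding Q_def by simp
  next
    fix H K x assume a: "sg H" "sg K" "K \<subseteq> H" "x \<in> Q K"
    have "(H, tr T K H x) \<in> S"
    proof (rule clo[of "{(K, x)}"])
      show "finite {(K, x)}" by simp
      show "{(K, x)} \<subseteq> S" using a unfolding Q_def by simp
      fix P assume P: "tambara_ideal G T P" and m: "\<forall>p\<in>{(K, x)}. snd p \<in> P (fst p)"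
      have "x \<in> P K" using m by auto
      then show "tr T K H x \<in> P H" by (rule TI_tr[OF P a(1-3)])
    qed
    then show "tr T K H x \<in> Q H" unfolding Q_def by simp
  next
    fix H K x assume a: "sg H" "sg K" "K \<subseteq> H" "x \<in> Q K"
    have "(H, nm T K H x) \<in> S"
    proof (rule clo[of "{(K, x)}"])
      show "finite {(K, x)}" by simp
      show "{(K, x)} \<subseteq> S" using a unfolding Q_def by simp
      fix P assume P: "tambara_ideal G T P" and m: "\<forall>p\<in>{(K, x)}. snd p \<in> P (fst p)"
      have "x \<in> P K" using m by auto
      then show "nm T K H x \<in> P H" by (rule TI_nm[OF P a(1-3)])
    qed
    then show "nm T K H x \<in> Q H" unfolding Q_def by simp
  next
    fix g K x assume a: "g \<in> carrier G" "sg K" "x \<in> Q K"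
    have "(conjg G g K, cj T g K x) \<in> S"
    proof (rule clo[of "{(K, x)}"])
      show "finite {(K, x)}" by simp
      show "{(K, x)} \<subseteq> S" using a unfolding Q_def by simp
      fix P assume P: "tambara_ideal G T P" and m: "\<forall>p\<in>{(K, x)}. snd p \<in> P (fst p)"
      have "x \<in> P K" using m by auto
      then show "cj T g K x \<in> P (conjg G g K)" by (rule TI_cj[OF P a(1-2)])
    qed
    then show "cj T g K x \<in> Q (conjg G g K)" unfolding Q_def by simp
  qed
  have Qone: "\<one>\<^bsub>R (carrier G)\<^esub> \<notin> Q (carrier G)"
  proof
    assume "\<one>\<^bsub>R (carrier G)\<^esub> \<in> Q (carrier G)"
    then have "(carrier G, \<one>\<^bsub>R (carrier G)\<^esub>) \<in> S" unfolding Q_def by simp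
    then obtain P where P: "P \<in> Bo E" "\<one>\<^bsub>R (carrier G)\<^esub> \<in> P (carrier G)"
      using real_single[OF reS] by fastforce
    show False using prime_one[OF Bo_prime[OF P(1)]] P(2) by simp
  qed
  have notreal: "\<exists>\<Phi>. finite \<Phi> \<and> \<Phi> \<subseteq> insert q S \<and> (\<forall>P\<in>Bo E. \<exists>p\<in>\<Phi>. snd p \<notin> P (fst p))"
    if q: "q \<notin> S" for q
  proof -
    have nr: "\<not> realizable E (insert q S)"
    proof
      assume r: "realizable E (insert q S)"
      have "X \<subseteq> insert q S" using XS by blast
      then have "insert q S = S" using max r subset_insertI by blast
      then show False using q by blast
    qed
    obtain \<Phi> where \<Phi>: "\<not> (finite \<Phi> \<longrightarrow> \<Phi> \<subseteq> insert q S \<longrightarrow> (\<exists>P\<in>Bo E. \<forall>p\<in>\<Phi>. snd p \<in> P (fst p)))"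
      using nr unfolding realizable_def not_all by (elim exE)
    have c: "finite \<Phi>" "\<Phi> \<subseteq> insert q S" "\<not> (\<exists>P\<in>Bo E. \<forall>p\<in>\<Phi>. snd p \<in> P (fst p))"
      using \<Phi> by simp_all
    have "\<forall>P\<in>Bo E. \<exists>p\<in>\<Phi>. snd p \<notin> P (fst p)" using c(3) by simp
    then show ?thesis using c(1,2) by (intro exI[of _ \<Phi>]) simp
  qed
  have Qprime: "tambara_prime G T Q" unfolding tambara_prime_def
  proof (intro conjI QI Qone allI impI)
    fix I1 I2 assume I1: "tambara_ideal G T I1" and I2: "tambara_ideal G T I2"
      and sub: "tambara_sub (tambara_prod G T I1 I2) Q"
    show "tambara_sub I1 Q \<or> tambara_sub I2 Q"
    proof (rule ccontr)
      assume nn: "\<not> (tambara_sub I1 Q \<or> tambara_sub I2 Q)"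
      then have "\<not> tambara_sub I1 Q" by blast
      then obtain H a where a: "a \<in> I1 H" "a \<notin> Q H" unfolding tambara_sub_def by blast
      have "\<not> tambara_sub I2 Q" using nn by blast
      then obtain K b where b: "b \<in> I2 K" "b \<notin> Q K" unfolding tambara_sub_def by blast
      have H: "sg H" by (rule TI_sg[OF I1 a(1)])
      have K: "sg K" by (rule TI_sg[OF I2 b(1)])
      have ac: "a \<in> carrier (R H)" by (rule TI_carrier[OF I1 H a(1)])
      have bc: "b \<in> carrier (R K)" by (rule TI_carrier[OF I2 K b(1)])
      obtain F where F: "finite F"
        "\<forall>I1 I2. tambara_ideal G T I1 \<longrightarrow> tambara_ideal G T I2 \<longrightarrow> a \<in> I1 H \<longrightarrow> b \<in> I2 K \<longrightarrow>
           (\<forall>p\<in>F. snd p \<in> tambara_prod G T I1 I2 (fst p))"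
        "\<forall>P. tambara_prime G T P \<longrightarrow> (\<forall>p\<in>F. snd p \<in> P (fst p)) \<longrightarrow> a \<in> P H \<or> b \<in> P K"
        using key[OF H ac K bc] by (elim exE conjE) (rule that)
      have FS: "F \<subseteq> S"
      proof
        fix p assume p: "p \<in> F"
        have "snd p \<in> tambara_prod G T I1 I2 (fst p)" using F(2) I1 I2 a(1) b(1) p by simp
        then have "snd p \<in> Q (fst p)" using sub unfolding tambara_sub_def by blast
        then show "p \<in> S" unfolding Q_def by simp
      qed
      have aS: "(H, a) \<notin> S" using a(2) unfolding Q_def by simp
      have bS: "(K, b) \<notin> S" using b(2) unfolding Q_def by simp
      obtain \<Phi>1 where P1: "finite \<Phi>1" "\<Phi>1 \<subseteq> insert (H, a) S" "\<forall>P\<in>Bo E. \<exists>p\<in>\<Phi>1. snd p \<notin> P (fst p)"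
        using notreal[OF aS] by blast
      obtain \<Phi>2 where P2: "finite \<Phi>2" "\<Phi>2 \<subseteq> insert (K, b) S" "\<forall>P\<in>Bo E. \<exists>p\<in>\<Phi>2. snd p \<notin> P (fst p)"
        using notreal[OF bS] by blast
      define \<Phi> where "\<Phi> = (\<Phi>1 - {(H, a)}) \<union> (\<Phi>2 - {(K, b)}) \<union> F"
      have f1: "finite \<Phi>" unfolding \<Phi>_def using P1(1) P2(1) F(1) by simp
      have f2: "\<Phi> \<subseteq> S" unfolding \<Phi>_def using P1(2) P2(2) FS by blast
      obtain P where P: "P \<in> Bo E" "\<forall>p\<in>\<Phi>. snd p \<in> P (fst p)"
        using reS[unfolded realizable_def, rule_format, OF f1 f2] by blast
      have "\<forall>p\<in>F. snd p \<in> P (fst p)" using P(2) unfolding \<Phi>_def by simp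
      then have "a \<in> P H \<or> b \<in> P K" using F(3) Bo_prime[OF P(1)] by simp
      then show False
      proof
        assume aP: "a \<in> P H"
        have "\<forall>p\<in>\<Phi>1. snd p \<in> P (fst p)"
        proof
          fix p assume p: "p \<in> \<Phi>1"
          show "snd p \<in> P (fst p)"
          proof (cases "p = (H, a)")
            case True then show ?thesis using aP by simp
          next
            case False then have "p \<in> \<Phi>" unfolding \<Phi>_def using p by blast
            then show ?thesis using P(2) by blast
          qed
        qed
        then show False using P1(3) P(1) by blast
      next
        assume bP: "b \<in> P K"
        have "\<forall>p\<in>\<Phi>2. snd p \<in> P (fst p)"
        proof
          fix p assume p: "p \<in> \<Phi>2"
          show "snd p \<in> P (fst p)"
          proof (cases "p = (K, b)")
            case True then show ?thesis using bP by simp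
          next
            case False then have "p \<in> \<Phi>" unfolding \<Phi>_def using p by blast
            then show ?thesis using P(2) by blast
          qed
        qed
        then show False using P2(3) P(1) by blast
      qed
    qed
  qed
  have QBo: "Q \<in> Bo E" unfolding Bo_def nak_spec_def
  proof (intro CollectI conjI ballI Qprime)
    fix p assume p: "p \<in> E"
    show "snd p \<notin> Q (fst p)"
    proof
      assume "snd p \<in> Q (fst p)"
      then have "p \<in> S" unfolding Q_def by simp
      then obtain P where P: "P \<in> Bo E" "snd p \<in> P (fst p)" using real_single[OF reS] by blast
      have "snd p \<notin> P (fst p)" using P(1) p unfolding Bo_def by blast
      then show False using P(2) by simp
    qed
  qed
  have "\<forall>p\<in>X. snd p \<in> Q (fst p)" using XS unfolding Q_def by auto
  then show False using hyp QBo by blast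
qed

end

context tamb begin

abbreviation "Spec \<equiv> nak_spec G T"
abbreviation "NT \<equiv> nak_topology G T"
definition Sb where "Sb = insert Spec {Spec - nak_V G T H x | H x. sg H \<and> x \<in> carrier (R H)}"
definition valid where "valid E \<longleftrightarrow> finite E \<and> (\<forall>p\<in>E. sg (fst p) \<and> snd p \<in> carrier (R (fst p)))"

lemma NT_eq: "NT = topology_generated_by Sb"
  unfolding nak_topology_def Sb_def ..

lemma Sb_sub: "s \<in> Sb \<Longrightarrow> s \<subseteq> Spec"
  unfolding Sb_def nak_V_def by blast

lemma topspace_NT: "topspace NT = Spec"
proof -
  have "\<Union>Sb = Spec" using Sb_sub unfolding Sb_def by blast
  then show ?thesis unfolding NT_eq topology_generated_by_topspace .
qed

lemma Sb_open: "s \<in> Sb \<Longrightarrow> openin NT s"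
  unfolding NT_eq by (rule topology_generated_by_Basis)

lemma Bo_empty: "Bo {} = Spec" unfolding Bo_def by simp

lemma Bo_single: "Bo {(H, x)} = Spec - nak_V G T H x"
  unfolding Bo_def nak_V_def by auto

lemma Bo_Un: "Bo (E1 \<union> E2) = Bo E1 \<inter> Bo E2"
  unfolding Bo_def by auto

lemma Bo_sub: "Bo E \<subseteq> Spec" unfolding Bo_def by blast

lemma valid_Un: "valid E1 \<Longrightarrow> valid E2 \<Longrightarrow> valid (E1 \<union> E2)"
  unfolding valid_def by blast

lemma Bo_open: "valid E \<Longrightarrow> openin NT (Bo E)"
proof -
  assume v: "valid E"
  then have "finite E" unfolding valid_def by blast
  then show ?thesis using v
  proof (induction E rule: finite_induct)
    case empty
    show ?case unfolding Bo_empty by (rule Sb_open) (simp add: Sb_def)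
  next
    case (insert p E)
    obtain H x where p: "p = (H, x)" by (cases p)
    have s: "sg H" "x \<in> carrier (R H)" using insert.prems p unfolding valid_def by auto
    have "Bo (insert p E) = (Spec - nak_V G T H x) \<inter> Bo E"
      using Bo_Un[of "{(H, x)}" E] Bo_single p by simp
    moreover have "openin NT (Spec - nak_V G T H x)" by (rule Sb_open) (use s in \<open>auto simp: Sb_def\<close>)
    moreover have "openin NT (Bo E)" using insert.IH insert.prems insert.hyps(1) unfolding valid_def by blast
    ultimately show ?case by (simp add: openin_Int)
  qed
qed

lemma open_basis_aux: "generate_topology_on Sb W \<Longrightarrow> \<forall>P\<in>W. \<exists>E. valid E \<and> P \<in> Bo E \<and> Bo E \<subseteq> W"
proof (induction rule: generate_topology_on.induct)
  case Empty then show ?case by simp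
next
  case (Int a b)
  show ?case
  proof
    fix P assume P: "P \<in> a \<inter> b"
    obtain E1 where E1: "valid E1" "P \<in> Bo E1" "Bo E1 \<subseteq> a" using Int.IH(1) P by blast
    obtain E2 where E2: "valid E2" "P \<in> Bo E2" "Bo E2 \<subseteq> b" using Int.IH(2) P by blast
    have "valid (E1 \<union> E2)" by (rule valid_Un[OF E1(1) E2(1)])
    moreover have "P \<in> Bo (E1 \<union> E2)" "Bo (E1 \<union> E2) \<subseteq> a \<inter> b" using E1 E2 Bo_Un by auto
    ultimately show "\<exists>E. valid E \<and> P \<in> Bo E \<and> Bo E \<subseteq> a \<inter> b" by blast
  qed
next
  case (UN K)
  show ?case
  proof
    fix P assume "P \<in> \<Union>K"
    then obtain k where k: "k \<in> K" "P \<in> k" by blast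
    then obtain E where "valid E" "P \<in> Bo E" "Bo E \<subseteq> k" using UN.IH by blast
    then show "\<exists>E. valid E \<and> P \<in> Bo E \<and> Bo E \<subseteq> \<Union>K" using k by blast
  qed
next
  case (Basis s)
  show ?case
  proof
    fix P assume P: "P \<in> s"
    show "\<exists>E. valid E \<and> P \<in> Bo E \<and> Bo E \<subseteq> s"
    proof (cases "s = Spec")
      case True
      have "valid {}" unfolding valid_def by simp
      then show ?thesis using P True Bo_empty by auto
    next
      case False
      then obtain H x where s: "s = Spec - nak_V G T H x" "sg H" "x \<in> carrier (R H)"
        using Basis unfolding Sb_def by blast
      have "valid {(H, x)}" unfolding valid_def using s by simp
      then show ?thesis using P s Bo_single by auto
    qed
  qed
qed

lemma open_basis: "openin NT W \<Longrightarrow> P \<in> W \<Longrightarrow> \<exists>E. valid E \<and> P \<in> Bo E \<and> Bo E \<subseteq> W"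
  using open_basis_aux openin_topology_generated_by_iff NT_eq by metis

lemma inter_open: "finite \<F> \<Longrightarrow> \<F> \<subseteq> Sb \<Longrightarrow> openin NT (Spec \<inter> \<Inter>\<F>)"
proof (induction \<F> rule: finite_induct)
  case empty
  have "openin NT (topspace NT)" by simp
  then show ?case using topspace_NT by simp
next
  case (insert f \<F>)
  have "Spec \<inter> \<Inter>(insert f \<F>) = f \<inter> (Spec \<inter> \<Inter>\<F>)" using Sb_sub[of f] insert.prems by blast
  moreover have "openin NT f" using Sb_open insert.prems by blast
  ultimately show ?case using insert.IH insert.prems by (simp add: openin_Int)
qed

end

context tamb begin

lemma subtop_eq: assumes v: "valid E"
  shows "topology (arbitrary union_of (finite intersection_of (\<lambda>x. x \<in> Sb) relative_to Bo E)) = subtopology NT (Bo E)"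
proof -
  have "openin (topology (arbitrary union_of (finite intersection_of (\<lambda>x. x \<in> Sb) relative_to Bo E))) W
        \<longleftrightarrow> openin (subtopology NT (Bo E)) W" for W
  proof
    assume "openin (topology (arbitrary union_of (finite intersection_of (\<lambda>x. x \<in> Sb) relative_to Bo E))) W"
    then have "(arbitrary union_of (finite intersection_of (\<lambda>x. x \<in> Sb) relative_to Bo E)) W"
      by (simp add: openin_subbase)
    then obtain \<U> where U: "\<U> \<subseteq> Collect (finite intersection_of (\<lambda>x. x \<in> Sb) relative_to Bo E)" "\<Union>\<U> = W"
      unfolding union_of_def by blast
    have "openin (subtopology NT (Bo E)) U" if u: "U \<in> \<U>" for U
    proof -
      obtain V where V: "(finite intersection_of (\<lambda>x. x \<in> Sb)) V" "Bo E \<inter> V = U"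
        using U(1) u unfolding relative_to_def by blast
      obtain \<F> where F: "finite \<F>" "\<F> \<subseteq> Sb" "\<Inter>\<F> = V"
        using V(1) unfolding intersection_of_def by auto
      have "U = (Spec \<inter> \<Inter>\<F>) \<inter> Bo E" using V(2) F(3) Bo_sub by blast
      moreover have "openin NT (Spec \<inter> \<Inter>\<F>)" by (rule inter_open[OF F(1,2)])
      ultimately show ?thesis unfolding openin_subtopology by blast
    qed
    then show "openin (subtopology NT (Bo E)) W" using U(2) by blast
  next
    assume "openin (subtopology NT (Bo E)) W"
    then obtain Ov where O: "openin NT Ov" "W = Ov \<inter> Bo E" unfolding openin_subtopology by blast
    define \<U> where "\<U> = {Bo E' \<inter> Bo E | E'. valid E' \<and> Bo E' \<subseteq> Ov}"
    have "\<Union>\<U> = W"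
    proof
      show "\<Union>\<U> \<subseteq> W" unfolding \<U>_def O(2) by blast
      show "W \<subseteq> \<Union>\<U>"
      proof
        fix P assume P: "P \<in> W"
        obtain E' where E': "valid E'" "P \<in> Bo E'" "Bo E' \<subseteq> Ov" using open_basis[OF O(1)] P O(2) by blast
        then show "P \<in> \<Union>\<U>" unfolding \<U>_def using P O(2) by blast
      qed
    qed
    moreover have "(finite intersection_of (\<lambda>x. x \<in> Sb) relative_to Bo E) U" if u: "U \<in> \<U>" for U
    proof -
      obtain E' where E': "valid E'" "U = Bo E' \<inter> Bo E" using u unfolding \<U>_def by blast
      define \<F> where "\<F> = (\<lambda>p. Spec - nak_V G T (fst p) (snd p)) ` E'"
      have F1: "finite \<F>" unfolding \<F>_def using E'(1) unfolding valid_def by simp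
      have F2: "\<F> \<subseteq> Sb" unfolding \<F>_def Sb_def using E'(1) unfolding valid_def by force
      have "Bo E' = Spec \<inter> \<Inter>\<F>" unfolding \<F>_def Bo_def nak_V_def by auto
      then have "Bo E \<inter> \<Inter>\<F> = U" using E'(2) Bo_sub by blast
      moreover have "(finite intersection_of (\<lambda>x. x \<in> Sb)) (\<Inter>\<F>)"
        unfolding intersection_of_def using F1 F2 by blast
      ultimately show ?thesis unfolding relative_to_def by blast
    qed
    ultimately have "(arbitrary union_of (finite intersection_of (\<lambda>x. x \<in> Sb) relative_to Bo E)) W"
      unfolding union_of_def arbitrary_def by blast
    then show "openin (topology (arbitrary union_of (finite intersection_of (\<lambda>x. x \<in> Sb) relative_to Bo E))) W"
      by (simp add: openin_subbase)
  qed
  then show ?thesis by (simp add: topology_eq)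
qed

lemma Bo_compact: assumes v: "valid E" shows "compactin NT (Bo E)"
proof -
  have "compact_space (subtopology NT (Bo E))"
  proof (rule Alexander_subbase_alt[where \<B> = Sb])
    show "Bo E \<subseteq> \<Union>Sb" using Bo_sub unfolding Sb_def by blast
    show "topology (arbitrary union_of (finite intersection_of (\<lambda>x. x \<in> Sb) relative_to Bo E)) = subtopology NT (Bo E)"
      by (rule subtop_eq[OF v])
    fix C assume C: "C \<subseteq> Sb" and cov: "Bo E \<subseteq> \<Union>C"
    show "\<exists>C'. finite C' \<and> C' \<subseteq> C \<and> Bo E \<subseteq> \<Union>C'"
    proof (cases "Spec \<in> C")
      case True
      then show ?thesis using Bo_sub by (intro exI[of _ "{Spec}"]) auto
    next
      case False
      define X where "X = {p. sg (fst p) \<and> snd p \<in> carrier (R (fst p)) \<and> Spec - nak_V G T (fst p) (snd p) \<in> C}"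
      have hyp: "\<forall>P\<in>Bo E. \<exists>p\<in>X. snd p \<notin> P (fst p)"
      proof
        fix P assume P: "P \<in> Bo E"
        then obtain c where c: "c \<in> C" "P \<in> c" using cov by blast
        then have "c \<in> Sb" "c \<noteq> Spec" using C False by auto
        then obtain H x where s: "c = Spec - nak_V G T H x" "sg H" "x \<in> carrier (R H)"
          unfolding Sb_def by blast
        have "(H, x) \<in> X" unfolding X_def using s c by simp
        moreover have "x \<notin> P H" using c(2) s(1) P Bo_sub unfolding nak_V_def by blast
        ultimately show "\<exists>p\<in>X. snd p \<notin> P (fst p)" by force
      qed
      obtain X' where X': "finite X'" "X' \<subseteq> X" "\<forall>P\<in>Bo E. \<exists>p\<in>X'. snd p \<notin> P (fst p)"
        using cover[OF hyp] by blast
      define C' where "C' = (\<lambda>p. Spec - nak_V G T (fst p) (snd p)) ` X'"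
      have "finite C'" unfolding C'_def using X'(1) by simp
      moreover have "C' \<subseteq> C" unfolding C'_def using X'(2) unfolding X_def by blast
      moreover have "Bo E \<subseteq> \<Union>C'"
      proof
        fix P assume P: "P \<in> Bo E"
        then obtain p where p: "p \<in> X'" "snd p \<notin> P (fst p)" using X'(3) by blast
        have "P \<in> Spec - nak_V G T (fst p) (snd p)" using P Bo_sub p(2) unfolding nak_V_def by blast
        then show "P \<in> \<Union>C'" unfolding C'_def using p(1) by blast
      qed
      ultimately show ?thesis by blast
    qed
  qed
  then show ?thesis unfolding compactin_subspace using Bo_sub topspace_NT by simp
qed

end

context tamb begin

lemma closure_single: assumes P: "P \<in> Spec"
  shows "NT closure_of {P} = {Q \<in> Spec. \<forall>L. P L \<subseteq> Q L}"
proof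
  show "NT closure_of {P} \<subseteq> {Q \<in> Spec. \<forall>L. P L \<subseteq> Q L}"
  proof
    fix Q assume Q: "Q \<in> NT closure_of {P}"
    then have QS: "Q \<in> Spec" and cl: "\<And>T. Q \<in> T \<Longrightarrow> openin NT T \<Longrightarrow> P \<in> T"
      unfolding closure_of_def topspace_NT by auto
    have "P L \<subseteq> Q L" for L
    proof
      fix y assume y: "y \<in> P L"
      have PI: "tambara_ideal G T P" using P unfolding nak_spec_def by (blast intro: prime_ideal)
      have L: "sg L" by (rule TI_sg[OF PI y])
      have yc: "y \<in> carrier (R L)" by (rule TI_carrier[OF PI L y])
      show "y \<in> Q L"
      proof (rule ccontr)
        assume "y \<notin> Q L"
        then have "Q \<in> Bo {(L, y)}" using QS unfolding Bo_def by simp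
        moreover have "openin NT (Bo {(L, y)})" by (rule Bo_open) (use L yc in \<open>simp add: valid_def\<close>)
        ultimately have "P \<in> Bo {(L, y)}" by (rule cl)
        then show False using y unfolding Bo_def by simp
      qed
    qed
    then show "Q \<in> {Q \<in> Spec. \<forall>L. P L \<subseteq> Q L}" using QS by blast
  qed
  show "{Q \<in> Spec. \<forall>L. P L \<subseteq> Q L} \<subseteq> NT closure_of {P}"
  proof
    fix Q assume Q: "Q \<in> {Q \<in> Spec. \<forall>L. P L \<subseteq> Q L}"
    have "P \<in> W" if W: "Q \<in> W" "openin NT W" for W
    proof -
      obtain E where E: "valid E" "Q \<in> Bo E" "Bo E \<subseteq> W" using open_basis[OF W(2,1)] by blast
      have "P \<in> Bo E" using E(2) P Q unfolding Bo_def by blast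
      then show ?thesis using E(3) by blast
    qed
    then show "Q \<in> NT closure_of {P}" unfolding closure_of_def topspace_NT using Q by blast
  qed
qed

lemma V_closed: assumes "sg H" "x \<in> carrier (R H)" shows "closedin NT (nak_V G T H x)"
proof -
  have "topspace NT - nak_V G T H x = Bo {(H, x)}" unfolding topspace_NT Bo_single ..
  moreover have "openin NT (Bo {(H, x)})" by (rule Bo_open) (use assms in \<open>simp add: valid_def\<close>)
  moreover have "nak_V G T H x \<subseteq> topspace NT" unfolding topspace_NT nak_V_def by blast
  ultimately show ?thesis unfolding closedin_def by simp
qed

lemma irr_finite: assumes Z: "irreducible_closed NT Z" and fin: "finite \<C>"
  shows "(\<forall>C\<in>\<C>. closedin NT C) \<Longrightarrow> Z \<subseteq> \<Union>\<C> \<Longrightarrow> \<exists>C\<in>\<C>. Z \<subseteq> C"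
  using fin
proof (induction \<C> rule: finite_induct)
  case empty
  then show ?case using Z unfolding irreducible_closed_def by simp
next
  case (insert C \<C>)
  have c1: "closedin NT C" using insert.prems by simp
  have c2: "closedin NT (\<Union>\<C>)" by (rule closedin_Union[OF insert.hyps(1)]) (use insert.prems in simp)
  have "Z \<subseteq> C \<union> \<Union>\<C>" using insert.prems by simp
  then have "Z \<subseteq> C \<or> Z \<subseteq> \<Union>\<C>" using Z c1 c2 unfolding irreducible_closed_def by blast
  then show ?case
  proof
    assume "Z \<subseteq> C" then show ?thesis by blast
  next
    assume "Z \<subseteq> \<Union>\<C>" then show ?thesis using insert.IH insert.prems by blast
  qed
qed

lemma spec_prime: "Q \<in> Spec \<Longrightarrow> tambara_prime G T Q"
  unfolding nak_spec_def by simp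

lemma sober: "sober_space NT"
  unfolding sober_space_def
proof (intro allI impI)
  fix Z assume Z: "irreducible_closed NT Z"
  have Zc: "closedin NT Z" and Zne: "Z \<noteq> {}" using Z unfolding irreducible_closed_def by auto
  have ZS: "Z \<subseteq> Spec" using closedin_subset[OF Zc] topspace_NT by simp
  define P0 where "P0 = (\<lambda>L. \<Inter> {Q L | Q. Q \<in> Z})"
  have P0I: "tambara_ideal G T P0" unfolding P0_def
    by (rule TI_inter[OF Zne]) (use ZS spec_prime prime_ideal in blast)
  have P0le: "P0 L \<subseteq> Q L" if "Q \<in> Z" for Q L unfolding P0_def using that by blast
  have P0one: "\<one>\<^bsub>R (carrier G)\<^esub> \<notin> P0 (carrier G)"
  proof
    assume a: "\<one>\<^bsub>R (carrier G)\<^esub> \<in> P0 (carrier G)"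
    obtain Q where Q: "Q \<in> Z" using Zne by blast
    have "\<one>\<^bsub>R (carrier G)\<^esub> \<in> Q (carrier G)" using P0le[OF Q] a by blast
    then show False using prime_one[OF spec_prime] Q ZS by blast
  qed
  have P0prime: "tambara_prime G T P0" unfolding tambara_prime_def
  proof (intro conjI P0I P0one allI impI)
    fix I1 I2 assume I1: "tambara_ideal G T I1" and I2: "tambara_ideal G T I2"
      and sub: "tambara_sub (tambara_prod G T I1 I2) P0"
    show "tambara_sub I1 P0 \<or> tambara_sub I2 P0"
    proof (rule ccontr)
      assume nn: "\<not> (tambara_sub I1 P0 \<or> tambara_sub I2 P0)"
      then have "\<not> tambara_sub I1 P0" by blast
      then obtain H a where a: "a \<in> I1 H" "a \<notin> P0 H" unfolding tambara_sub_def by blast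
      have "\<not> tambara_sub I2 P0" using nn by blast
      then obtain K b where b: "b \<in> I2 K" "b \<notin> P0 K" unfolding tambara_sub_def by blast
      have H: "sg H" by (rule TI_sg[OF I1 a(1)])
      have K: "sg K" by (rule TI_sg[OF I2 b(1)])
      have ac: "a \<in> carrier (R H)" by (rule TI_carrier[OF I1 H a(1)])
      have bc: "b \<in> carrier (R K)" by (rule TI_carrier[OF I2 K b(1)])
      obtain Q1 where Q1: "Q1 \<in> Z" "a \<notin> Q1 H" using a(2) unfolding P0_def by blast
      obtain Q2 where Q2: "Q2 \<in> Z" "b \<notin> Q2 K" using b(2) unfolding P0_def by blast
      have "Z \<subseteq> nak_V G T H a \<union> nak_V G T K b"
      proof
        fix Q assume Q: "Q \<in> Z"
        have Qp: "tambara_prime G T Q" using Q ZS spec_prime by blast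
        have "tambara_sub (tambara_prod G T I1 I2) Q"
          using sub P0le[OF Q] unfolding tambara_sub_def by blast
        then have "tambara_sub I1 Q \<or> tambara_sub I2 Q" by (rule prime_prime[OF Qp I1 I2])
        then have "a \<in> Q H \<or> b \<in> Q K" using a(1) b(1) unfolding tambara_sub_def by blast
        then show "Q \<in> nak_V G T H a \<union> nak_V G T K b" using Q ZS unfolding nak_V_def by blast
      qed
      then have "Z \<subseteq> nak_V G T H a \<or> Z \<subseteq> nak_V G T K b"
        using Z V_closed[OF H ac] V_closed[OF K bc] unfolding irreducible_closed_def by blast
      then show False using Q1 Q2 unfolding nak_V_def by blast
    qed
  qed
  have P0S: "P0 \<in> Spec" unfolding nak_spec_def using P0prime by simp
  have P0Z: "P0 \<in> Z"
  proof (rule ccontr)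
    assume nZ: "P0 \<notin> Z"
    have op: "openin NT (Spec - Z)" using Zc unfolding closedin_def topspace_NT by simp
    have P0m: "P0 \<in> Spec - Z" using P0S nZ by simp
    obtain E where E: "valid E" "P0 \<in> Bo E" "Bo E \<subseteq> Spec - Z" using open_basis[OF op P0m] by (elim exE conjE)
    have finE: "finite E" using E(1) unfolding valid_def by simp
    define \<C> where "\<C> = (\<lambda>p. nak_V G T (fst p) (snd p)) ` E"
    have cov: "Z \<subseteq> \<Union>\<C>"
    proof
      fix Q assume Q: "Q \<in> Z"
      have QS: "Q \<in> Spec" using Q ZS by blast
      have "Q \<notin> Bo E" using E(3) Q by blast
      then have "\<not> (\<forall>p\<in>E. snd p \<notin> Q (fst p))" using QS unfolding Bo_def by simp
      then obtain p where p: "p \<in> E" "snd p \<in> Q (fst p)" by blast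
      have "Q \<in> nak_V G T (fst p) (snd p)" using QS p(2) unfolding nak_V_def by simp
      then show "Q \<in> \<Union>\<C>" unfolding \<C>_def using p(1) by blast
    qed
    have clo: "\<forall>C\<in>\<C>. closedin NT C"
    proof
      fix C assume "C \<in> \<C>"
      then obtain p where p: "p \<in> E" "C = nak_V G T (fst p) (snd p)" unfolding \<C>_def by blast
      have "sg (fst p)" "snd p \<in> carrier (R (fst p))" using E(1) p(1) unfolding valid_def by auto
      then show "closedin NT C" unfolding p(2) by (rule V_closed)
    qed
    have "finite \<C>" unfolding \<C>_def using finE by simp
    then obtain C where C: "C \<in> \<C>" "Z \<subseteq> C" using irr_finite[OF Z _ clo cov] by blast
    then obtain p where p: "p \<in> E" "Z \<subseteq> nak_V G T (fst p) (snd p)" unfolding \<C>_def by blast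
    have "\<forall>Q\<in>Z. snd p \<in> Q (fst p)" using p(2) unfolding nak_V_def by blast
    then have "snd p \<in> P0 (fst p)" unfolding P0_def by blast
    moreover have "snd p \<notin> P0 (fst p)" using E(2) p(1) unfolding Bo_def by simp
    ultimately show False by simp
  qed
  have cl: "NT closure_of {P0} = Z"
  proof
    show "NT closure_of {P0} \<subseteq> Z" by (rule closure_of_minimal) (use P0Z Zc in auto)
    show "Z \<subseteq> NT closure_of {P0}" unfolding closure_single[OF P0S] using ZS P0le by blast
  qed
  show "\<exists>!x. x \<in> topspace NT \<and> NT closure_of {x} = Z"
  proof (rule ex1I[of _ P0])
    show "P0 \<in> topspace NT \<and> NT closure_of {P0} = Z" using P0S cl topspace_NT by simp
    fix P assume P: "P \<in> topspace NT \<and> NT closure_of {P} = Z"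
    have PS: "P \<in> Spec" using P topspace_NT by simp
    have "P0 \<in> NT closure_of {P}" using P P0Z by simp
    then have le1: "\<forall>L. P L \<subseteq> P0 L" unfolding closure_single[OF PS] by blast
    have "P \<in> NT closure_of {P0}" using P cl closure_single[OF PS] PS by blast
    then have le2: "\<forall>L. P0 L \<subseteq> P L" unfolding closure_single[OF P0S] by blast
    show "P = P0" using le1 le2 by (intro ext) blast
  qed
qed

lemma fin_basic: assumes U: "openin NT U" and C: "compactin NT U"
  shows "\<exists>\<E>. finite \<E> \<and> (\<forall>E\<in>\<E>. valid E) \<and> U = \<Union>(Bo ` \<E>)"
proof -
  define \<U> where "\<U> = Bo ` {E. valid E \<and> Bo E \<subseteq> U}"
  have "\<forall>V\<in>\<U>. openin NT V" unfolding \<U>_def using Bo_open by blast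
  moreover have "U \<subseteq> \<Union>\<U>"
  proof
    fix P assume "P \<in> U"
    then obtain E where "valid E" "P \<in> Bo E" "Bo E \<subseteq> U" using open_basis[OF U] by blast
    then show "P \<in> \<Union>\<U>" unfolding \<U>_def by blast
  qed
  ultimately obtain \<F> where F: "finite \<F>" "\<F> \<subseteq> \<U>" "U \<subseteq> \<Union>\<F>" using C unfolding compactin_def by blast
  obtain \<E> where E: "\<E> \<subseteq> {E. valid E \<and> Bo E \<subseteq> U}" "finite \<E>" "\<F> = Bo ` \<E>"
    using finite_subset_image[OF F(1) F(2)[unfolded \<U>_def]] by blast
  have "U = \<Union>(Bo ` \<E>)" using F(3) E by blast
  then show ?thesis using E by blast
qed

theorem spectral: "spectral_space NT"
  unfolding spectral_space_def
proof (intro conjI allI impI)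
  show "compact_space NT" unfolding compact_space_def topspace_NT
    using Bo_compact[of "{}"] Bo_empty by (simp add: valid_def)
  show "sober_space NT" by (rule sober)
next
  fix U V assume U: "openin NT U" "compactin NT U" and V: "openin NT V" "compactin NT V"
  obtain \<E>1 where E1: "finite \<E>1" "\<forall>E\<in>\<E>1. valid E" "U = \<Union>(Bo ` \<E>1)" using fin_basic[OF U] by blast
  obtain \<E>2 where E2: "finite \<E>2" "\<forall>E\<in>\<E>2. valid E" "V = \<Union>(Bo ` \<E>2)" using fin_basic[OF V] by blast
  have "U \<inter> V = \<Union>((\<lambda>(E1, E2). Bo (E1 \<union> E2)) ` (\<E>1 \<times> \<E>2))"
    unfolding E1(3) E2(3) Bo_Un by blast
  moreover have "compactin NT (\<Union>((\<lambda>(E1, E2). Bo (E1 \<union> E2)) ` (\<E>1 \<times> \<E>2)))"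
  proof (rule compactin_Union)
    show "finite ((\<lambda>(E1, E2). Bo (E1 \<union> E2)) ` (\<E>1 \<times> \<E>2))" using E1(1) E2(1) by simp
    fix S assume "S \<in> (\<lambda>(E1, E2). Bo (E1 \<union> E2)) ` (\<E>1 \<times> \<E>2)"
    then obtain A B where "A \<in> \<E>1" "B \<in> \<E>2" "S = Bo (A \<union> B)" by blast
    then show "compactin NT S" using Bo_compact valid_Un E1(2) E2(2) by simp
  qed
  ultimately show "compactin NT (U \<inter> V)" by simp
next
  fix W x assume W: "openin NT W" "x \<in> W"
  obtain E where E: "valid E" "x \<in> Bo E" "Bo E \<subseteq> W" using open_basis[OF W] by blast
  show "\<exists>U. openin NT U \<and> compactin NT U \<and> x \<in> U \<and> U \<subseteq> W"
    using Bo_open[OF E(1)] Bo_compact[OF E(1)] E(2,3) by blast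
qed

end

theorem theorem6p5:
  fixes G :: "('g, 'b) monoid_scheme" and T :: "('g, 'r) tambara_data"
  assumes "group G" and "finite (carrier G)" and "tambara_functor G T"
  shows "spectral_space (nak_topology G T)"
proof -
  interpret tamb G T by (rule tamb.intro[OF assms])
  show ?thesis by (rule spectral)
qed


end
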